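(* Let $\mathbf{X}=(\mathbf{X}_0',\dots,\mathbf{X}_k')'$ have a matrix variate spherical distribution with density generator $h$, $\mathbf{X}_i\in\mathbb{R}^{n_i\times m}$, $n_i\ge m\ge1$, $i=0,\dots,k$, $N=n_0+\cdots+n_k$. Let $V=\|\mathbf{X}_0\|^2$ and $\mathbf{R}_i=(V+\|\mathbf{X}_i\|^2)^{-1/2}\mathbf{X}_i$, $i=1,\dots,k$ (so $\|\mathbf{R}_i\|^2<1$). Then: (a) the joint density of $(V,\mathbf{R}_1,\dots,\mathbf{R}_k)$ on $\{v>0,\ \|\mathbf{R}_i\|^2<1\ \forall i\}$ with respect to $(dv)\bigwedge_{i=1}^k(d\mathbf{R}_i)$ is $$\frac{\pi^{n_0m/2}}{\Gamma[n_0m/2]}\,v^{Nm/2-1}\,h\Big[v\Big(1+\sum_{i=1}^k\frac{\|\mathbf{R}_i\|^2}{1-\|\mathbf{R}_i\|^2}\Big)\Big]\prod_{i=1}^k(1-\|\mathbf{R}_i\|^2)^{-n_im/2-1};$$ (b) the marginal density of $(\mathbf{R}_1,\dots,\mathbf{R}_k)$ with respect to $\bigwedge_{i=1}^k(d\mathbf{R}_i)$ is $$\frac{\Gamma[Nm/2]}{\pi^{(N-n_0)m/2}\Gamma[n_0m/2]}\Big[1+\sum_{i=1}^k\frac{\|\mathbf{R}_i\|^2}{1-\|\mathbf{R}_i\|^2}\Big]^{-Nm/2}\prod_{i=1}^k(1-\|\mathbf{R}_i\|^2)^{-n_im/2-1}.$$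
   Context: Standing setting: $\mathbf{X}\in\mathbb{R}^{N\times m}$ has a matrix variate spherical distribution with density generator $h$ if it has density $h(\operatorname{tr}\mathbf{X}'\mathbf{X})$ with respect to Lebesgue measure $(d\mathbf{X})$ on $\mathbb{R}^{N\times m}$, where $h:[0,\infty)\to[0,\infty)$ is measurable with $\int_{\mathbb{R}^{N\times m}}h(\operatorname{tr}\mathbf{X}'\mathbf{X})(d\mathbf{X})=1$. $\|\mathbf{A}\|=\sqrt{\operatorname{tr}\mathbf{A}'\mathbf{A}}$ is the Frobenius norm; $(d\mathbf{A})$ is Lebesgue measure on the entries of $\mathbf{A}$. $\Gamma[\cdot]$ is the Gamma function. *)

theory Defs
  imports "HOL-Probability.Probability"
begin

text \<open>A matrix in R^(N x m) is represented as an extensional function on the index set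
  {..<N} x {..<m}; Lebesgue measure (dX) is the product of Lebesgue measures on the entries.\<close>

definition mat_idx :: "nat \<Rightarrow> nat \<Rightarrow> (nat \<times> nat) set" where
  "mat_idx N m = {..<N} \<times> {..<m}"

definition mat_lebesgue :: "nat \<Rightarrow> nat \<Rightarrow> ((nat \<times> nat) \<Rightarrow> real) measure" where
  "mat_lebesgue N m = PiM (mat_idx N m) (\<lambda>_. lborel)"

definition frob_sq :: "nat \<Rightarrow> nat \<Rightarrow> ((nat \<times> nat) \<Rightarrow> real) \<Rightarrow> real" where
  "frob_sq N m X = (\<Sum>ij\<in>mat_idx N m. (X ij)\<^sup>2)"

definition spherical_dist :: "nat \<Rightarrow> nat \<Rightarrow> (real \<Rightarrow> real) \<Rightarrow> ((nat \<times> nat) \<Rightarrow> real) measure" where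
  "spherical_dist N m h = density (mat_lebesgue N m) (\<lambda>X. ennreal (h (frob_sq N m X)))"

text \<open>Row blocks: block i consists of rows row_off n i, ..., row_off n i + n i - 1.\<close>
definition row_off :: "(nat \<Rightarrow> nat) \<Rightarrow> nat \<Rightarrow> nat" where
  "row_off n i = (\<Sum>j<i. n j)"

definition blk_sq :: "(nat \<Rightarrow> nat) \<Rightarrow> nat \<Rightarrow> nat \<Rightarrow> ((nat \<times> nat) \<Rightarrow> real) \<Rightarrow> real" where
  "blk_sq n m i X = (\<Sum>r<n i. \<Sum>c<m. (X (row_off n i + r, c))\<^sup>2)"

text \<open>Index set of the tuple (R_1,...,R_k): entry (i,r,c) is entry (r,c) of R_i.\<close>
definition R_idx :: "nat \<Rightarrow> (nat \<Rightarrow> nat) \<Rightarrow> nat \<Rightarrow> (nat \<times> nat \<times> nat) set" where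
  "R_idx k n m = {(i, r, c). i \<in> {1..k} \<and> r < n i \<and> c < m}"

definition R_lebesgue :: "nat \<Rightarrow> (nat \<Rightarrow> nat) \<Rightarrow> nat \<Rightarrow> ((nat \<times> nat \<times> nat) \<Rightarrow> real) measure" where
  "R_lebesgue k n m = PiM (R_idx k n m) (\<lambda>_. lborel)"

definition V_stat :: "(nat \<Rightarrow> nat) \<Rightarrow> nat \<Rightarrow> ((nat \<times> nat) \<Rightarrow> real) \<Rightarrow> real" where
  "V_stat n m X = blk_sq n m 0 X"

definition R_stat :: "nat \<Rightarrow> (nat \<Rightarrow> nat) \<Rightarrow> nat \<Rightarrow> ((nat \<times> nat) \<Rightarrow> real) \<Rightarrow> ((nat \<times> nat \<times> nat) \<Rightarrow> real)" where
  "R_stat k n m X = restrict (\<lambda>(i, r, c). X (row_off n i + r, c) / sqrt (V_stat n m X + blk_sq n m i X))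
                       (R_idx k n m)"

definition R_sq :: "(nat \<Rightarrow> nat) \<Rightarrow> nat \<Rightarrow> ((nat \<times> nat \<times> nat) \<Rightarrow> real) \<Rightarrow> nat \<Rightarrow> real" where
  "R_sq n m R i = (\<Sum>r<n i. \<Sum>c<m. (R (i, r, c))\<^sup>2)"

end

theory Submission
  imports Defs
begin

definition sqn :: "'i set \<Rightarrow> ('i \<Rightarrow> real) \<Rightarrow> real" where
  "sqn I x = (\<Sum>j\<in>I. (x j)\<^sup>2)"

abbreviation LL :: "'i set \<Rightarrow> ('i \<Rightarrow> real) measure" where
  "LL I \<equiv> PiM I (\<lambda>_. lborel)"

definition scl :: "'i set \<Rightarrow> real \<Rightarrow> ('i \<Rightarrow> real) \<Rightarrow> ('i \<Rightarrow> real)" where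
  "scl I a x = restrict (\<lambda>j. a * x j) I"

lemma scl_measurable[measurable]: "scl I a \<in> measurable (LL I) (LL I)"
  unfolding scl_def by measurable

lemma sqn_measurable[measurable]: "finite I \<Longrightarrow> sqn I \<in> borel_measurable (LL I)"
  unfolding sqn_def by measurable

interpretation LLps: product_sigma_finite "\<lambda>_::'i. lborel :: real measure" ..

lemma scaling_density:
  fixes I :: "'a set"
  assumes "finite I" "a > 0"
  shows "density (distr (LL I) (LL I) (scl I a)) (\<lambda>_. ennreal (a ^ card I)) = LL I"
proof (rule LLps.PiM_eqI)
  fix A :: "'a \<Rightarrow> real set" assume A: "\<And>i. i \<in> I \<Longrightarrow> A i \<in> sets lborel"
  have pre: "scl I a -` Pi\<^sub>E I A \<inter> space (LL I) = Pi\<^sub>E I (\<lambda>i. (\<lambda>x. a * x) -` A i)"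
    using assms by (auto simp: scl_def space_PiM PiE_iff extensional_def)
  have one: "emeasure lborel ((\<lambda>x. a * x) -` A i) = ennreal (1/a) * emeasure lborel (A i)"
    if "i \<in> I" for i
  proof -
    have "emeasure lborel ((\<lambda>x. a * x) -` A i) = emeasure (distr lborel borel ((*) a)) (A i)"
      using A[OF that] by (subst emeasure_distr) auto
    also have "\<dots> = emeasure (density lborel (\<lambda>_. ennreal (inverse a))) (A i)"
      using assms by (subst lborel_distr_mult) auto
    also have "\<dots> = ennreal (1/a) * emeasure lborel (A i)"
      using A[OF that] assms by (subst emeasure_density_const) (auto simp: field_simps)
    finally show ?thesis .
  qed
  have "emeasure (density (distr (LL I) (LL I) (scl I a)) (\<lambda>_. ennreal (a ^ card I))) (Pi\<^sub>E I A)
      = ennreal (a ^ card I) * emeasure (LL I) (scl I a -` Pi\<^sub>E I A \<inter> space (LL I))"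
    using A assms by (subst emeasure_density_const) (auto simp: emeasure_distr)
  also have "\<dots> = ennreal (a ^ card I) * (\<Prod>i\<in>I. ennreal (1/a) * emeasure lborel (A i))"
  proof -
    have ms: "(\<lambda>x. a * x) -` A i \<in> sets lborel" if "i \<in> I" for i
    proof -
      have "(\<lambda>x::real. a * x) -` A i \<inter> space borel \<in> sets borel"
        using A[OF that] by (intro measurable_sets[of _ borel borel]) auto
      then show ?thesis by simp
    qed
    show ?thesis using assms ms by (simp add: pre LLps.emeasure_PiM one)
  qed
  also have "\<dots> = ennreal (a ^ card I) * (ennreal (1/a) ^ card I * (\<Prod>i\<in>I. emeasure lborel (A i)))"
    by (simp add: prod.distrib)
  also have "\<dots> = (\<Prod>i\<in>I. emeasure lborel (A i))"
    using assms by (simp add: ennreal_power[symmetric] ennreal_mult[symmetric] mult.assoc[symmetric] power_mult_distrib[symmetric])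
  finally show "emeasure (density (distr (LL I) (LL I) (scl I a)) (\<lambda>_. ennreal (a ^ card I))) (Pi\<^sub>E I A) = (\<Prod>i\<in>I. emeasure lborel (A i))" .
qed (use assms in auto)


lemma sqn_nonneg: "0 \<le> sqn I x"
  unfolding sqn_def by (intro sum_nonneg) auto

lemma sqn_scl: "sqn I (scl I a x) = a\<^sup>2 * sqn I x"
  unfolding sqn_def scl_def by (simp add: sum_distrib_left power_mult_distrib)

lemma scaling_emeasure:
  fixes I :: "'a set"
  assumes "finite I" "a > 0" "S \<in> sets (LL I)"
  shows "emeasure (LL I) (scl I a -` S \<inter> space (LL I)) = ennreal ((1/a) ^ card I) * emeasure (LL I) S"
proof -
  let ?X = "emeasure (LL I) (scl I a -` S \<inter> space (LL I))"
  have "emeasure (LL I) S = ennreal (a ^ card I) * ?X"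
    using assms by (subst scaling_density[OF assms(1,2), symmetric])
      (simp add: emeasure_density_const emeasure_distr)
  then have "ennreal ((1/a) ^ card I) * emeasure (LL I) S = ennreal ((1/a) ^ card I * a ^ card I) * ?X"
    using assms by (simp add: ennreal_mult mult.assoc)
  also have "(1/a) ^ card I * a ^ card I = 1"
    using assms by (simp add: power_mult_distrib[symmetric])
  finally show ?thesis by simp
qed

lemma ball_sets[measurable]: "finite I \<Longrightarrow> {x \<in> space (LL I). sqn I x \<le> t} \<in> sets (LL I)"
  by measurable

lemma ball_finite:
  fixes I :: "'a set"
  assumes "finite I"
  shows "emeasure (LL I) {x \<in> space (LL I). sqn I x \<le> t} < \<infinity>"
proof -
  have "{x \<in> space (LL I). sqn I x \<le> t} \<subseteq> Pi\<^sub>E I (\<lambda>_. {- sqrt t .. sqrt t})"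
  proof
    fix x assume x: "x \<in> {x \<in> space (LL I). sqn I x \<le> t}"
    have "- sqrt t \<le> x j \<and> x j \<le> sqrt t" if "j \<in> I" for j
    proof -
      have "(x j)\<^sup>2 \<le> sqn I x" unfolding sqn_def
        using assms that by (intro member_le_sum) auto
      then have "(x j)\<^sup>2 \<le> t" using x by auto
      then have "\<bar>x j\<bar> \<le> sqrt t" using real_sqrt_le_mono by fastforce
      then show ?thesis by (simp add: abs_le_iff)
    qed
    then show "x \<in> Pi\<^sub>E I (\<lambda>_. {- sqrt t .. sqrt t})"
      using x by (auto simp: space_PiM PiE_iff)
  qed
  then have "emeasure (LL I) {x \<in> space (LL I). sqn I x \<le> t} \<le> emeasure (LL I) (Pi\<^sub>E I (\<lambda>_. {- sqrt t .. sqrt t}))"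
    by (intro emeasure_mono) (auto intro!: sets_PiM_I_finite assms)
  also have "\<dots> = (\<Prod>i\<in>I. emeasure lborel {- sqrt t .. sqrt t})"
    using assms by (subst LLps.emeasure_PiM) auto
  also have "\<dots> < \<infinity>" by (auto simp: emeasure_lborel_Icc_eq ennreal_power power_0_left)
  finally show ?thesis .
qed

lemma null_zero:
  fixes I :: "'a set"
  assumes "finite I" "I \<noteq> {}"
  shows "emeasure (LL I) {x \<in> space (LL I). sqn I x \<le> 0} = 0"
proof -
  have "{x \<in> space (LL I). sqn I x \<le> 0} \<subseteq> Pi\<^sub>E I (\<lambda>_. {0})"
  proof
    fix x assume x: "x \<in> {x \<in> space (LL I). sqn I x \<le> 0}"
    have "x j = 0" if "j \<in> I" for j
    proof -
      have "(x j)\<^sup>2 \<le> sqn I x" unfolding sqn_def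
        using assms that by (intro member_le_sum) auto
      moreover have "sqn I x \<le> 0" using x by simp
      ultimately have "(x j)\<^sup>2 \<le> 0" by linarith
      then show ?thesis by simp
    qed
    then show "x \<in> Pi\<^sub>E I (\<lambda>_. {0})"
      using x by (auto simp: space_PiM PiE_iff extensional_def fun_eq_iff)
  qed
  then have "emeasure (LL I) {x \<in> space (LL I). sqn I x \<le> 0} \<le> emeasure (LL I) (Pi\<^sub>E I (\<lambda>_. {0}))"
    by (rule emeasure_mono, intro sets_PiM_I_finite) (use assms in auto)
  also have "\<dots> = (\<Prod>i\<in>I. emeasure lborel {0::real})"
    using assms by (subst LLps.emeasure_PiM) auto
  also have "\<dots> = 0" using assms by (simp add: card_gt_0_iff)
  finally show ?thesis by simp
qed

definition cone :: "'a set \<Rightarrow> ('a \<Rightarrow> real) set \<Rightarrow> bool" where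
  "cone I C \<longleftrightarrow> C \<subseteq> space (LL I) \<and> (\<forall>c>0. \<forall>x\<in>space (LL I). scl I c x \<in> C \<longleftrightarrow> x \<in> C)"

lemma cone_ball:
  fixes I :: "'a set"
  assumes I: "finite I" "I \<noteq> {}" and C: "cone I C" "C \<in> sets (LL I)" and t: "t \<ge> 0"
  shows "emeasure (LL I) (C \<inter> {x. sqn I x \<le> t})
       = ennreal (t powr (real (card I) / 2)) * emeasure (LL I) (C \<inter> {x. sqn I x \<le> 1})"
proof (cases "t = 0")
  case True
  have "emeasure (LL I) (C \<inter> {x. sqn I x \<le> t}) \<le> emeasure (LL I) {x \<in> space (LL I). sqn I x \<le> 0}"
    using C I True by (intro emeasure_mono) (auto simp: cone_def)
  then show ?thesis using null_zero[OF I] True by simp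
next
  case False
  then have t: "t > 0" using t by simp
  define a where "a = 1 / sqrt t"
  have a: "a > 0" using t by (simp add: a_def)
  have "scl I a -` (C \<inter> {x. sqn I x \<le> 1}) \<inter> space (LL I) = C \<inter> {x. sqn I x \<le> t}"
  proof -
    have "sqn I (scl I a x) \<le> 1 \<longleftrightarrow> sqn I x \<le> t" for x
      using t by (simp add: sqn_scl a_def power_divide field_simps)
    then show ?thesis using C a by (auto simp: cone_def)
  qed
  moreover have "C \<inter> {x. sqn I x \<le> 1} \<in> sets (LL I)"
  proof -
    have "C \<inter> {x. sqn I x \<le> 1} = C \<inter> {x \<in> space (LL I). sqn I x \<le> 1}"
      using C by (auto simp: cone_def)
    then show ?thesis using C I by simp
  qed
  ultimately have "emeasure (LL I) (C \<inter> {x. sqn I x \<le> t}) = ennreal ((1/a) ^ card I) * emeasure (LL I) (C \<inter> {x. sqn I x \<le> 1})"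
    using scaling_emeasure[OF I(1) a] by metis
  also have "(1/a) ^ card I = t powr (real (card I) / 2)"
  proof -
    have "(1/a) ^ card I = (t powr (1/2)) ^ card I" using t by (simp add: a_def powr_half_sqrt)
    also have "\<dots> = t powr (real (card I) / 2)"
      using t by (simp add: powr_realpow[symmetric] powr_powr)
    finally show ?thesis .
  qed
  finally show ?thesis .
qed

definition rho :: "nat \<Rightarrow> real \<Rightarrow> real" where
  "rho d u = indicator {0<..} u * (real d / 2) * u powr (real d / 2 - 1)"

lemma rho_nonneg: "0 \<le> rho d u" unfolding rho_def by (auto simp: indicator_def)

lemma rho_measurable[measurable]: "rho d \<in> borel_measurable borel"
  unfolding rho_def by measurable

definition nu :: "nat \<Rightarrow> real measure" where
  "nu d = density lborel (\<lambda>u. ennreal (rho d u))"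

lemma sets_nu[measurable_cong, simp]: "sets (nu d) = sets borel"
  by (simp add: nu_def)

lemma space_nu[simp]: "space (nu d) = UNIV"
  by (simp add: nu_def)

lemma nu_atMost:
  assumes d: "d \<ge> 1"
  shows "emeasure (nu d) {..t} = ennreal ((max t 0) powr (real d / 2))"
proof (cases "t \<le> 0")
  case True
  have "emeasure (nu d) {..t} = (\<integral>\<^sup>+ u. ennreal (rho d u) * indicator {..t} u \<partial>lborel)"
    by (simp add: nu_def emeasure_density)
  also have "\<dots> = (\<integral>\<^sup>+ (u::real). 0 \<partial>lborel)"
    by (rule nn_integral_cong) (use True in \<open>auto simp: rho_def indicator_def\<close>)
  finally show ?thesis using True by simp
next
  case False
  then have t: "t > 0" by simp
  have "emeasure (nu d) {..t} = (\<integral>\<^sup>+ u. ennreal (rho d u) * indicator {..t} u \<partial>lborel)"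
    by (simp add: nu_def emeasure_density)
  also have "\<dots> = (\<integral>\<^sup>+ u. ennreal (indicator {0..t} u * ((real d / 2) * u powr (real d / 2 - 1))) \<partial>lborel)"
    by (intro nn_integral_cong_AE, rule AE_mp[OF AE_lborel_singleton[of 0]])
       (auto simp: rho_def indicator_def ennreal_mult')
  also have "\<dots> = ennreal ((real d / 2) * (t powr (real d / 2 - 1 + 1) / (real d / 2 - 1 + 1)))"
  proof (rule nn_integral_has_integral_lebesgue)
    show "\<And>x. x \<in> {0..t} \<Longrightarrow> 0 \<le> real d / 2 * x powr (real d / 2 - 1)" by simp
    show "((\<lambda>x. real d / 2 * x powr (real d / 2 - 1)) has_integral
          real d / 2 * (t powr (real d / 2 - 1 + 1) / (real d / 2 - 1 + 1))) {0..t}"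
      using d t by (intro has_integral_mult_right has_integral_powr_from_0) auto
  qed
  also have "(real d / 2) * (t powr (real d / 2 - 1 + 1) / (real d / 2 - 1 + 1)) = (max t 0) powr (real d / 2)"
    using d t by simp
  finally show ?thesis .
qed

lemma cone_measure:
  fixes I :: "'a set"
  assumes I: "finite I" "I \<noteq> {}" and C: "cone I C" "C \<in> sets (LL I)" and A: "A \<in> sets borel"
  shows "emeasure (LL I) (C \<inter> sqn I -` A) = emeasure (LL I) (C \<inter> {x. sqn I x \<le> 1}) * emeasure (nu (card I)) A"
proof -
  define K where "K = emeasure (LL I) (C \<inter> {x. sqn I x \<le> 1})"
  have Cs: "C \<subseteq> space (LL I)" using C by (auto simp: cone_def)
  have d: "card I \<ge> 1" using I by (simp add: Suc_leI card_gt_0_iff)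
  have Kfin: "K < \<infinity>"
  proof -
    have "K \<le> emeasure (LL I) {x \<in> space (LL I). sqn I x \<le> 1}"
      unfolding K_def using Cs I by (intro emeasure_mono) auto
    then show ?thesis using ball_finite[OF I(1), of 1] by (simp add: le_less_trans)
  qed
  define M1 where "M1 = distr (density (LL I) (indicator C)) borel (sqn I)"
  define M2 where "M2 = density (nu (card I)) (\<lambda>_. K)"
  have set_eq: "C \<inter> sqn I -` B = C \<inter> (sqn I -` B \<inter> space (LL I))" for B
    using Cs by auto
  have M1: "emeasure M1 B = emeasure (LL I) (C \<inter> sqn I -` B)" if "B \<in> sets borel" for B
    unfolding M1_def using that C I
    by (simp add: emeasure_distr emeasure_restricted set_eq)
  have M2: "emeasure M2 B = K * emeasure (nu (card I)) B" if "B \<in> sets borel" for B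
    unfolding M2_def using that by (simp add: emeasure_density_const)
  have atM: "emeasure (LL I) (C \<inter> sqn I -` {..t}) = K * emeasure (nu (card I)) {..t}" for t
  proof (cases "t \<ge> 0")
    case True
    have "emeasure (LL I) (C \<inter> sqn I -` {..t}) = emeasure (LL I) (C \<inter> {x. sqn I x \<le> t})"
      by (simp add: vimage_def)
    also have "\<dots> = ennreal (t powr (real (card I) / 2)) * K"
      unfolding K_def by (rule cone_ball[OF I C True])
    finally show ?thesis using True d by (simp add: nu_atMost mult.commute)
  next
    case False
    have "\<not> sqn I x \<le> t" for x using False sqn_nonneg[of I x] by linarith
    then have "C \<inter> sqn I -` {..t} = {}" by auto
    then show ?thesis using False d by (simp add: nu_atMost)
  qed
  have "M1 = M2"
  proof (rule measure_eqI_generator_eq[where E="range (\<lambda>a. {..a::real})" and \<Omega>=UNIV and A="\<lambda>n. {..real n}"])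
    show "Int_stable (range (\<lambda>a. {..a::real}))"
      by (auto simp: Int_stable_def)
    show "range (\<lambda>a. {..a::real}) \<subseteq> Pow UNIV" by auto
    show "emeasure M1 X = emeasure M2 X" if "X \<in> range (\<lambda>a. {..a::real})" for X
      using that by (auto simp: M1 M2 atM)
    show "sets M1 = sigma_sets UNIV (range (\<lambda>a. {..a::real}))"
      unfolding M1_def by (simp add: borel_eq_atMost)
    show "sets M2 = sigma_sets UNIV (range (\<lambda>a. {..a::real}))"
      unfolding M2_def by (simp add: borel_eq_atMost)
    show "range (\<lambda>n. {..real n}) \<subseteq> range (\<lambda>a. {..a::real})" by auto
    show "(\<Union>i. {..real i}) = UNIV" by (auto intro: real_arch_simple)
    show "emeasure M1 {..real i} \<noteq> \<infinity>" for i
      using Kfin d by (simp add: M1 atM nu_atMost ennreal_mult_eq_top_iff)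
  qed
  then show ?thesis using A by (metis M1 M2 K_def)
qed

definition dirn :: "'a set \<Rightarrow> ('a \<Rightarrow> real) \<Rightarrow> ('a \<Rightarrow> real)" where
  "dirn I x = restrict (\<lambda>j. x j / sqrt (sqn I x)) I"

lemma dirn_measurable[measurable]: "finite I \<Longrightarrow> dirn I \<in> measurable (LL I) (LL I)"
  unfolding dirn_def by measurable

definition sig :: "'a set \<Rightarrow> ('a \<Rightarrow> real) measure" where
  "sig I = distr (density (LL I) (indicator {x \<in> space (LL I). sqn I x \<le> 1})) (LL I) (dirn I)"

lemma sets_sig[measurable_cong, simp]: "sets (sig I) = sets (LL I)"
  by (simp add: sig_def)

lemma space_sig[simp]: "space (sig I) = space (LL I)"
  by (simp add: sig_def)

lemma dirn_scl: "c > 0 \<Longrightarrow> dirn I (scl I c x) = dirn I x"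
  unfolding dirn_def sqn_scl by (auto simp: scl_def real_sqrt_mult fun_eq_iff)

lemma scl_space: "x \<in> space (LL I) \<Longrightarrow> scl I c x \<in> space (LL I)"
  by (auto simp: scl_def space_PiM)

lemma sigma_finite_nu: "sigma_finite_measure (nu d)"
  unfolding nu_def by (subst sigma_finite_measure.sigma_finite_iff_density_finite[OF sigma_finite_lborel]) auto

lemma emeasure_sig:
  assumes "finite I" "B \<in> sets (LL I)"
  shows "emeasure (sig I) B = emeasure (LL I) ((dirn I -` B \<inter> space (LL I)) \<inter> {x. sqn I x \<le> 1})"
proof -
  have "emeasure (sig I) B = emeasure (LL I) ({x \<in> space (LL I). sqn I x \<le> 1} \<inter> (dirn I -` B \<inter> space (LL I)))"
    unfolding sig_def using assms by (simp add: emeasure_distr emeasure_restricted)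
  also have "{x \<in> space (LL I). sqn I x \<le> 1} \<inter> (dirn I -` B \<inter> space (LL I)) = (dirn I -` B \<inter> space (LL I)) \<inter> {x. sqn I x \<le> 1}"
    by auto
  finally show ?thesis .
qed

lemma finite_sig: "finite I \<Longrightarrow> finite_measure (sig I)"
proof
  assume I: "finite I"
  have "emeasure (sig I) (space (sig I)) \<le> emeasure (LL I) {x \<in> space (LL I). sqn I x \<le> 1}"
    using I by (subst emeasure_sig) (auto intro!: emeasure_mono)
  then show "emeasure (sig I) (space (sig I)) \<noteq> \<infinity>"
    using ball_finite[OF I, of 1] by (auto simp: top_unique)
qed

theorem polar:
  fixes I :: "'a set"
  assumes I: "finite I" "I \<noteq> {}"
  shows "nu (card I) \<Otimes>\<^sub>M sig I = distr (LL I) (borel \<Otimes>\<^sub>M LL I) (\<lambda>x. (sqn I x, dirn I x))"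
proof (rule pair_measure_eqI)
  show "sigma_finite_measure (nu (card I))" by (rule sigma_finite_nu)
  interpret finite_measure "sig I" using finite_sig[OF I(1)] .
  show "sigma_finite_measure (sig I)" ..
  have "sets (nu (card I) \<Otimes>\<^sub>M sig I) = sets (borel \<Otimes>\<^sub>M LL I)"
    by (rule sets_pair_measure_cong) simp_all
  then show "sets (nu (card I) \<Otimes>\<^sub>M sig I) = sets (distr (LL I) (borel \<Otimes>\<^sub>M LL I) (\<lambda>x. (sqn I x, dirn I x)))"
    by simp
  fix A B assume A: "A \<in> sets (nu (card I))" and B: "B \<in> sets (sig I)"
  define C where "C = dirn I -` B \<inter> space (LL I)"
  have Cs: "C \<in> sets (LL I)" unfolding C_def
    using measurable_sets[OF dirn_measurable[OF I(1)], of B] B by simp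
  have cone: "cone I C"
    unfolding cone_def C_def
  proof (intro conjI allI impI ballI)
    fix c x assume c: "(0::real) < c" and x: "x \<in> space (LL I)"
    show "scl I c x \<in> dirn I -` B \<inter> space (LL I) \<longleftrightarrow> x \<in> dirn I -` B \<inter> space (LL I)"
      using x c by (simp add: dirn_scl scl_space)
  qed auto
  have "emeasure (distr (LL I) (borel \<Otimes>\<^sub>M LL I) (\<lambda>x. (sqn I x, dirn I x))) (A \<times> B)
      = emeasure (LL I) ((\<lambda>x. (sqn I x, dirn I x)) -` (A \<times> B) \<inter> space (LL I))"
    using A B I by (intro emeasure_distr) auto
  also have "(\<lambda>x. (sqn I x, dirn I x)) -` (A \<times> B) \<inter> space (LL I) = C \<inter> sqn I -` A"
    unfolding C_def by auto
  also have "emeasure (LL I) (C \<inter> sqn I -` A) = emeasure (LL I) (C \<inter> {x. sqn I x \<le> 1}) * emeasure (nu (card I)) A"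
    using A by (intro cone_measure[OF I cone Cs]) auto
  also have "emeasure (LL I) (C \<inter> {x. sqn I x \<le> 1}) = emeasure (sig I) B"
    unfolding C_def using B I by (simp add: emeasure_sig)
  finally show "emeasure (nu (card I)) A * emeasure (sig I) B =
      emeasure (distr (LL I) (borel \<Otimes>\<^sub>M LL I) (\<lambda>x. (sqn I x, dirn I x))) (A \<times> B)"
    by (simp add: mult.commute)
qed

lemma AE_nonzero:
  fixes I :: "'a set"
  assumes I: "finite I" "I \<noteq> {}"
  shows "AE x in LL I. sqn I x \<noteq> 0"
proof (rule AE_I')
  show "{x \<in> space (LL I). sqn I x \<le> 0} \<in> null_sets (LL I)"
    using null_zero[OF I] I by (auto simp: null_sets_def)
qed auto

lemma sqn_dirn: "sqn I x \<noteq> 0 \<Longrightarrow> sqn I (dirn I x) = 1"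
  using sqn_nonneg[of I x]
  by (simp add: sqn_def dirn_def power_divide sum_divide_distrib[symmetric])

lemma scl_dirn: "x \<in> space (LL I) \<Longrightarrow> sqn I x \<noteq> 0 \<Longrightarrow> scl I (sqrt (sqn I x)) (dirn I x) = x"
  using sqn_nonneg[of I x]
  by (auto simp: scl_def dirn_def space_PiM PiE_iff extensional_def fun_eq_iff)

lemma AE_sig_sphere:
  fixes I :: "'a set"
  assumes I: "finite I" "I \<noteq> {}"
  shows "AE w in sig I. sqn I w = 1"
proof -
  have "AE x in density (LL I) (indicator {x \<in> space (LL I). sqn I x \<le> 1}). sqn I (dirn I x) = 1"
    using AE_nonzero[OF I] I by (subst AE_density) (auto elim!: eventually_mono simp: sqn_dirn)
  then show ?thesis unfolding sig_def using I by (subst AE_distr_iff) auto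
qed

lemma scl_measurable2[measurable]:
  "finite I \<Longrightarrow> (\<lambda>(u, w). scl I (sqrt u) w) \<in> measurable (borel \<Otimes>\<^sub>M LL I) (LL I)"
  unfolding scl_def by measurable

theorem polar_nn_integral:
  fixes I :: "'a set"
  assumes I: "finite I" "I \<noteq> {}" and F[measurable]: "F \<in> borel_measurable (LL I)"
  shows "(\<integral>\<^sup>+ x. F x \<partial>LL I) = (\<integral>\<^sup>+ w. \<integral>\<^sup>+ u. F (scl I (sqrt u) w) \<partial>nu (card I) \<partial>sig I)"
proof -
  interpret fs: finite_measure "sig I" using finite_sig[OF I(1)] .
  interpret ps: pair_sigma_finite "nu (card I)" "sig I"
    using sigma_finite_nu by (intro pair_sigma_finite.intro) (auto intro: fs.sigma_finite_measure_axioms)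
  have "(\<integral>\<^sup>+ x. F x \<partial>LL I) = (\<integral>\<^sup>+ x. (\<lambda>(u, w). F (scl I (sqrt u) w)) (sqn I x, dirn I x) \<partial>LL I)"
  proof (rule nn_integral_cong_AE)
    show "AE x in LL I. F x = (\<lambda>(u, w). F (scl I (sqrt u) w)) (sqn I x, dirn I x)"
      using AE_nonzero[OF I] by (rule AE_mp) (auto intro!: AE_I2 simp: scl_dirn)
  qed
  also have "\<dots> = (\<integral>\<^sup>+ p. (\<lambda>(u, w). F (scl I (sqrt u) w)) p \<partial>distr (LL I) (borel \<Otimes>\<^sub>M LL I) (\<lambda>x. (sqn I x, dirn I x)))"
    using I by (subst nn_integral_distr) auto
  also have "\<dots> = (\<integral>\<^sup>+ p. (\<lambda>(u, w). F (scl I (sqrt u) w)) p \<partial>(nu (card I) \<Otimes>\<^sub>M sig I))"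
    by (simp add: polar[OF I])
  also have "\<dots> = (\<integral>\<^sup>+ w. \<integral>\<^sup>+ u. F (scl I (sqrt u) w) \<partial>nu (card I) \<partial>sig I)"
    using I by (subst ps.nn_integral_snd[symmetric]) auto
  finally show ?thesis .
qed

lemma AE_nu_pos: "AE u in nu d. u > 0"
  unfolding nu_def by (subst AE_density) (auto simp: rho_def indicator_def)

lemma radial_S:
  fixes I :: "'a set" and \<Psi> :: "real \<Rightarrow> ennreal"
  assumes I: "finite I" "I \<noteq> {}" and P[measurable]: "\<Psi> \<in> borel_measurable borel"
  shows "(\<integral>\<^sup>+ x. \<Psi> (sqn I x) \<partial>LL I) = emeasure (sig I) (space (LL I)) * (\<integral>\<^sup>+ u. \<Psi> u \<partial>nu (card I))"
proof -
  have "(\<integral>\<^sup>+ x. \<Psi> (sqn I x) \<partial>LL I) = (\<integral>\<^sup>+ w. \<integral>\<^sup>+ u. \<Psi> (sqn I (scl I (sqrt u) w)) \<partial>nu (card I) \<partial>sig I)"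
    using I by (intro polar_nn_integral) auto
  also have "\<dots> = (\<integral>\<^sup>+ w. (\<integral>\<^sup>+ u. \<Psi> u \<partial>nu (card I)) \<partial>sig I)"
  proof (rule nn_integral_cong_AE)
    show "AE w in sig I. (\<integral>\<^sup>+ u. \<Psi> (sqn I (scl I (sqrt u) w)) \<partial>nu (card I)) = (\<integral>\<^sup>+ u. \<Psi> u \<partial>nu (card I))"
      using AE_sig_sphere[OF I]
    proof (rule AE_mp, intro AE_I2 impI)
      fix w assume w: "sqn I w = 1"
      show "(\<integral>\<^sup>+ u. \<Psi> (sqn I (scl I (sqrt u) w)) \<partial>nu (card I)) = (\<integral>\<^sup>+ u. \<Psi> u \<partial>nu (card I))"
      proof (rule nn_integral_cong_AE)
        show "AE u in nu (card I). \<Psi> (sqn I (scl I (sqrt u) w)) = \<Psi> u"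
          using AE_nu_pos[of "card I"] by (rule AE_mp) (auto intro!: AE_I2 simp: sqn_scl w)
      qed
    qed
  qed
  also have "\<dots> = emeasure (sig I) (space (LL I)) * (\<integral>\<^sup>+ u. \<Psi> u \<partial>nu (card I))"
    by (simp add: mult.commute)
  finally show ?thesis .
qed

lemma gauss_1: "(\<integral>\<^sup>+ t. ennreal (exp (- t\<^sup>2)) \<partial>lborel) = ennreal (sqrt pi)"
proof -
  have "has_bochner_integral lborel (\<lambda>x::real. exp (- x\<^sup>2)) (2 *\<^sub>R (sqrt pi / 2))"
    by (rule has_bochner_integral_even_function[OF gaussian_moment_0]) simp
  then have h: "has_bochner_integral lborel (\<lambda>x::real. exp (- x\<^sup>2)) (sqrt pi)" by simp
  then show ?thesis
    by (subst nn_integral_eq_integrable) (auto simp: has_bochner_integral_iff)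
qed

lemma gauss_I:
  fixes I :: "'a set"
  assumes I: "finite I"
  shows "(\<integral>\<^sup>+ x. ennreal (exp (- sqn I x)) \<partial>LL I) = ennreal (pi powr (real (card I) / 2))"
proof -
  have "(\<integral>\<^sup>+ x. ennreal (exp (- sqn I x)) \<partial>LL I) = (\<integral>\<^sup>+ x. (\<Prod>j\<in>I. ennreal (exp (- (x j)\<^sup>2))) \<partial>LL I)"
    by (intro nn_integral_cong)
       (use I in \<open>simp add: sqn_def sum_negf[symmetric] exp_sum prod_ennreal\<close>)
  also have "\<dots> = (\<Prod>j\<in>I. (\<integral>\<^sup>+ t. ennreal (exp (- t\<^sup>2)) \<partial>lborel))"
    using I by (intro LLps.product_nn_integral_prod) auto
  also have "\<dots> = ennreal (sqrt pi ^ card I)"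
    by (simp add: gauss_1 prod_ennreal ennreal_power)
  also have "sqrt pi ^ card I = pi powr (real (card I) / 2)"
    by (simp add: powr_half_sqrt[symmetric] powr_realpow[symmetric] powr_powr)
  finally show ?thesis .
qed

lemma nu_exp:
  assumes d: "d \<ge> 1"
  shows "(\<integral>\<^sup>+ u. ennreal (exp (- u)) \<partial>nu d) = ennreal (real d / 2 * Gamma (real d / 2))"
proof -
  have "(\<integral>\<^sup>+ u. ennreal (exp (- u)) \<partial>nu d) = (\<integral>\<^sup>+ u. ennreal (rho d u) * ennreal (exp (- u)) \<partial>lborel)"
    unfolding nu_def by (subst nn_integral_density) auto
  also have "\<dots> = (\<integral>\<^sup>+ u. ennreal (real d / 2) * ennreal (indicator {0..} u * u powr (real d / 2 - 1) / exp u) \<partial>lborel)"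
    by (intro nn_integral_cong_AE, rule AE_mp[OF AE_lborel_singleton[of 0]])
       (auto intro!: AE_I2 simp: rho_def indicator_def ennreal_mult'[symmetric] exp_minus field_simps)
  also have "\<dots> = ennreal (real d / 2) * ennreal (Gamma (real d / 2))"
    using d by (subst nn_integral_cmult) (auto simp: Gamma_conv_nn_integral_real)
  moreover have "0 \<le> Gamma (real d / 2)" using d by (intro less_imp_le Gamma_real_pos) auto
  ultimately show ?thesis by (simp add: ennreal_mult'[symmetric])
qed

lemma sig_total:
  fixes I :: "'a set"
  assumes I: "finite I" "I \<noteq> {}"
  shows "emeasure (sig I) (space (LL I)) = ennreal (pi powr (real (card I) / 2) / (real (card I) / 2 * Gamma (real (card I) / 2)))"
proof -
  have d: "card I \<ge> 1" using I by (simp add: Suc_leI card_gt_0_iff)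
  define g where "g = real (card I) / 2 * Gamma (real (card I) / 2)"
  have g: "g > 0" using d unfolding g_def by (intro mult_pos_pos Gamma_real_pos) auto
  have eq: "ennreal (pi powr (real (card I) / 2)) = emeasure (sig I) (space (LL I)) * ennreal g"
    using radial_S[OF I, of "\<lambda>u. ennreal (exp (- u))"] gauss_I[OF I(1)] nu_exp[OF d]
    by (simp add: g_def)
  have "emeasure (sig I) (space (LL I)) = emeasure (sig I) (space (LL I)) * ennreal (g * (1 / g))"
  proof -
    have "g * (1 / g) = 1" using g by simp
    then show ?thesis by (metis mult.right_neutral ennreal_1)
  qed
  also have "\<dots> = (emeasure (sig I) (space (LL I)) * ennreal g) * ennreal (1 / g)"
  proof -
    have "ennreal (g * (1 / g)) = ennreal g * ennreal (1 / g)" using g by (intro ennreal_mult) auto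
    then show ?thesis by (simp only: mult.assoc)
  qed
  also have "\<dots> = ennreal (pi powr (real (card I) / 2)) * ennreal (1 / g)"
    using eq by simp
  also have "\<dots> = ennreal (pi powr (real (card I) / 2) / g)"
    using g by (simp add: ennreal_mult[symmetric])
  finally show ?thesis by (simp add: g_def)
qed

definition cst :: "nat \<Rightarrow> real" where
  "cst d = pi powr (real d / 2) / Gamma (real d / 2)"

theorem radial:
  fixes I :: "'a set" and \<Psi> :: "real \<Rightarrow> ennreal"
  assumes I: "finite I" "I \<noteq> {}" and P[measurable]: "\<Psi> \<in> borel_measurable borel"
  shows "(\<integral>\<^sup>+ x. \<Psi> (sqn I x) \<partial>LL I) =
     (\<integral>\<^sup>+ u. ennreal (indicator {0<..} u * cst (card I) * u powr (real (card I) / 2 - 1)) * \<Psi> u \<partial>lborel)"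
proof -
  have d: "card I \<ge> 1" using I by (simp add: Suc_leI card_gt_0_iff)
  have G: "Gamma (real (card I) / 2) > 0" using d by (intro Gamma_real_pos) auto
  have "(\<integral>\<^sup>+ x. \<Psi> (sqn I x) \<partial>LL I) = ennreal (pi powr (real (card I) / 2) / (real (card I) / 2 * Gamma (real (card I) / 2)))
       * (\<integral>\<^sup>+ u. ennreal (rho (card I) u) * \<Psi> u \<partial>lborel)"
    using I by (simp add: radial_S sig_total nu_def nn_integral_density)
  also have "\<dots> = (\<integral>\<^sup>+ u. ennreal (pi powr (real (card I) / 2) / (real (card I) / 2 * Gamma (real (card I) / 2))) * (ennreal (rho (card I) u) * \<Psi> u) \<partial>lborel)"
    by (rule nn_integral_cmult[symmetric]) auto
  also have "\<dots> = (\<integral>\<^sup>+ u. ennreal (indicator {0<..} u * cst (card I) * u powr (real (card I) / 2 - 1)) * \<Psi> u \<partial>lborel)"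
  proof (rule nn_integral_cong)
    fix u :: real
    have "pi powr (real (card I) / 2) / (real (card I) / 2 * Gamma (real (card I) / 2)) * rho (card I) u
        = indicator {0<..} u * cst (card I) * u powr (real (card I) / 2 - 1)"
      using d G by (auto simp: rho_def cst_def indicator_def)
    moreover have "0 \<le> pi powr (real (card I) / 2) / (real (card I) / 2 * Gamma (real (card I) / 2))"
      using G by simp
    ultimately show "ennreal (pi powr (real (card I) / 2) / (real (card I) / 2 * Gamma (real (card I) / 2))) * (ennreal (rho (card I) u) * \<Psi> u)
        = ennreal (indicator {0<..} u * cst (card I) * u powr (real (card I) / 2 - 1)) * \<Psi> u"
      by (metis (no_types, lifting) ennreal_mult mult.assoc rho_nonneg)
  qed
  finally show ?thesis .
qed

lemma SUP_ind:
  fixes F :: real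
  assumes "incseq A" "0 \<le> F"
  shows "(SUP i. ennreal (F * indicator (A i) x)) = ennreal (F * indicator (\<Union>i. A i) x)"
proof (cases "x \<in> (\<Union>i. A i)")
  case True
  then obtain i where i: "x \<in> A i" by auto
  show ?thesis
  proof (rule antisym)
    show "(SUP i. ennreal (F * indicator (A i) x)) \<le> ennreal (F * indicator (\<Union>i. A i) x)"
      using True by (intro SUP_least) (auto simp: indicator_def assms)
    have "ennreal (F * indicator (\<Union>i. A i) x) = ennreal (F * indicator (A i) x)"
      using True i by (simp add: indicator_def)
    also have "\<dots> \<le> (SUP i. ennreal (F * indicator (A i) x))" by (rule SUP_upper) auto
    finally show "ennreal (F * indicator (\<Union>i. A i) x) \<le> (SUP i. ennreal (F * indicator (A i) x))" .
  qed
next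
  case False
  then show ?thesis by (auto simp: indicator_def)
qed

lemma mono_conv_ind:
  fixes F :: "real \<Rightarrow> real"
  assumes "incseq A" "\<And>x. 0 \<le> F x" "F \<in> borel_measurable borel" "\<And>i. A i \<in> sets borel"
  shows "(SUP i. \<integral>\<^sup>+ x. ennreal (F x * indicator (A i) x) \<partial>lborel) = (\<integral>\<^sup>+ x. ennreal (F x * indicator (\<Union>i. A i) x) \<partial>lborel)"
proof -
  have "(SUP i. \<integral>\<^sup>+ x. ennreal (F x * indicator (A i) x) \<partial>lborel) = (\<integral>\<^sup>+ x. (SUP i. ennreal (F x * indicator (A i) x)) \<partial>lborel)"
  proof (rule nn_integral_monotone_convergence_SUP[symmetric])
    show "incseq (\<lambda>i x. ennreal (F x * indicator (A i) x))"
      using assms(1,2) by (auto simp: incseq_def le_fun_def indicator_def subset_iff intro!: ennreal_leI)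
    show "(\<lambda>x. ennreal (F x * indicator (A i) x)) \<in> borel_measurable lborel" for i
      using assms(3,4) by measurable
  qed
  also have "\<dots> = (\<integral>\<^sup>+ x. ennreal (F x * indicator (\<Union>i. A i) x) \<partial>lborel)"
    using assms by (simp add: SUP_ind)
  finally show ?thesis .
qed

definition Jac :: "real \<Rightarrow> nat \<Rightarrow> real \<Rightarrow> real" where
  "Jac v d r = v powr (real d / 2) * (1 - r) powr (- (real d / 2) - 1)"

lemma rho_Jac:
  assumes v: "v > 0" and r: "0 < r" "r < 1"
  shows "rho d (v * r / (1 - r)) * (v / (1 - r)\<^sup>2) = rho d r * Jac v d r"
proof -
  define a where "a = real d / 2 - 1"
  have pos: "v * r / (1 - r) > 0" using v r by simp
  have e1: "(v * r / (1 - r)) powr a = v powr a * r powr a * (1 - r) powr (- a)"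
    using v r by (subst powr_divide) (auto simp: powr_mult powr_minus divide_inverse)
  have e2: "v powr a * v = v powr (real d / 2)"
    using v by (simp add: a_def powr_diff)
  have e3: "(1 - r) powr (- a) * inverse ((1 - r)\<^sup>2) = (1 - r) powr (- (real d / 2) - 1)"
  proof -
    have "(1 - r)\<^sup>2 = (1 - r) powr 2" using r by (simp add: powr_realpow)
    then have "(1 - r) powr (- a) * inverse ((1 - r)\<^sup>2) = (1 - r) powr (- a - 2)"
      using r by (simp add: powr_diff divide_inverse)
    also have "- a - 2 = - (real d / 2) - 1" by (simp add: a_def)
    finally show ?thesis .
  qed
  have "rho d (v * r / (1 - r)) * (v / (1 - r)\<^sup>2)
      = (real d / 2) * (v powr a * r powr a * (1 - r) powr (- a)) * (v * inverse ((1 - r)\<^sup>2))"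
  proof -
    have "rho d (v * r / (1 - r)) = (real d / 2) * (v * r / (1 - r)) powr a"
      using pos by (simp add: rho_def a_def)
    then show ?thesis unfolding e1 by (simp only: divide_inverse)
  qed
  also have "\<dots> = (real d / 2) * r powr a * (v powr a * v) * ((1 - r) powr (- a) * inverse ((1 - r)\<^sup>2))"
    by (simp only: ac_simps)
  also have "\<dots> = rho d r * Jac v d r"
  proof -
    have "rho d r = real d / 2 * r powr a" using r by (simp add: rho_def a_def)
    then show ?thesis unfolding e2 e3 Jac_def by (simp only: ac_simps)
  qed
  finally show ?thesis .
qed

lemma g_deriv:
  assumes "r < 1"
  shows "((\<lambda>r. v * r / (1 - r)) has_real_derivative (v / (1 - r)\<^sup>2)) (at r)"
proof -
  have "((\<lambda>r. v * r / (1 - r)) has_real_derivative ((v * (1 - r) - v * r * (- 1)) / (1 - r)\<^sup>2)) (at r)"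
    using assms by (intro derivative_eq_intros) (auto simp: power2_eq_square)
  also have "(v * (1 - r) - v * r * (- 1)) = v" by (simp add: algebra_simps)
  finally show ?thesis .
qed

lemma subst1:
  fixes H :: "real \<Rightarrow> real \<Rightarrow> real"
  assumes v: "v > 0"
    and Hm: "(\<lambda>p. H (fst p) (snd p)) \<in> borel_measurable (borel \<Otimes>\<^sub>M borel)"
    and Hn: "\<And>r u. 0 \<le> H r u"
  shows "(\<integral>\<^sup>+ u. ennreal (rho d u * H (u / (v + u)) u) \<partial>lborel)
       = (\<integral>\<^sup>+ r. ennreal (rho d r * indicator {..<1} r * Jac v d r * H r (v * r / (1 - r))) \<partial>lborel)"
proof -
  define g where "g r = v * r / (1 - r)" for r :: real
  define F where "F u = rho d u * H (u / (v + u)) u" for u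
  define K where "K r = rho d r * Jac v d r * H r (g r)" for r
  define b where "b n = 1 - 1 / (real n + 2)" for n :: nat
  have Hm2: "(\<lambda>x. H (f1 x) (f2 x)) \<in> borel_measurable borel"
    if "f1 \<in> borel_measurable borel" "f2 \<in> borel_measurable borel" for f1 f2 :: "real \<Rightarrow> real"
  proof -
    have "(\<lambda>x. (f1 x, f2 x)) \<in> measurable borel (borel \<Otimes>\<^sub>M borel)"
      using that by measurable
    from measurable_comp[OF this Hm] show ?thesis by (simp add: o_def)
  qed
  have Fm: "F \<in> borel_measurable borel" unfolding F_def by (intro borel_measurable_times rho_measurable Hm2) auto
  have Km: "K \<in> borel_measurable borel" unfolding K_def Jac_def g_def by (intro borel_measurable_times rho_measurable Hm2) auto
  have Fn: "0 \<le> F u" for u unfolding F_def by (intro mult_nonneg_nonneg rho_nonneg Hn)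
  have Jn: "0 \<le> Jac v d r" for r unfolding Jac_def by simp
  have Kn: "0 \<le> K r" for r unfolding K_def by (intro mult_nonneg_nonneg rho_nonneg Hn Jn)
  have b: "0 < b n" "b n < 1" for n unfolding b_def by (auto simp: field_simps)
  have gb: "g (b n) = v * (real n + 1)" for n
    unfolding g_def b_def by (simp add: field_simps)
  have step: "(\<integral>\<^sup>+ u. ennreal (F u * indicator {0..v * (real n + 1)} u) \<partial>lborel)
      = (\<integral>\<^sup>+ r. ennreal (K r * indicator {0..b n} r) \<partial>lborel)" for n
  proof -
    have "(\<integral>\<^sup>+ u. ennreal (F u * indicator {g 0..g (b n)} u) \<partial>lborel)
       = (\<integral>\<^sup>+ r. ennreal (F (g r) * (v / (1 - r)\<^sup>2) * indicator {0..b n} r) \<partial>lborel)"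
    proof (rule nn_integral_substitution)
      show "set_borel_measurable borel {g 0..g (b n)} F" using Fm by (simp add: set_borel_measurable_def)
      show "(g has_real_derivative v / (1 - x)\<^sup>2) (at x)" if "x \<in> {0..b n}" for x
        unfolding g_def using that b[of n] by (intro g_deriv) auto
      show "continuous_on {0..b n} (\<lambda>x. v / (1 - x)\<^sup>2)"
        using b[of n] by (intro continuous_intros) auto
      show "0 \<le> v / (1 - x)\<^sup>2" for x using v by simp
      show "0 \<le> b n" using b[of n] by simp
    qed
    also have "\<dots> = (\<integral>\<^sup>+ r. ennreal (K r * indicator {0..b n} r) \<partial>lborel)"
    proof (rule nn_integral_cong)
      fix r :: real
      show "ennreal (F (g r) * (v / (1 - r)\<^sup>2) * indicator {0..b n} r) = ennreal (K r * indicator {0..b n} r)"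
      proof (cases "r \<in> {0<..b n}")
        case True
        then have r: "0 < r" "r < 1" using b[of n] by auto
        have "g r / (v + g r) = r" using r v unfolding g_def by (simp add: field_simps)
        then have "F (g r) * (v / (1 - r)\<^sup>2) = K r"
          using rho_Jac[OF v r, of d] unfolding F_def K_def g_def by (simp add: ac_simps)
        then show ?thesis by simp
      next
        case False
        then have "r \<notin> {0..b n} \<or> r = 0" by auto
        then show ?thesis by (auto simp: F_def K_def g_def rho_def)
      qed
    qed
    finally show ?thesis using gb by (simp add: g_def)
  qed
  have inc1: "incseq (\<lambda>n. {0..v * (real n + 1)})"
    using v by (auto simp: incseq_def)
  have inc2: "incseq (\<lambda>n. {0..b n})"
    unfolding b_def by (auto simp: incseq_def frac_le intro: order_trans)
  have U1: "(\<Union>n. {0..v * (real n + 1)}) = {0..}"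
  proof -
    have "x \<in> (\<Union>n. {0..v * (real n + 1)})" if "0 \<le> x" for x
    proof -
      obtain n where "x / v \<le> real n" using real_arch_simple by blast
      then have "x \<le> v * (real n + 1)" using v by (simp add: field_simps)
      then show ?thesis using that by auto
    qed
    then show ?thesis by auto
  qed
  have U2: "(\<Union>n. {0..b n}) = {0..<1}"
  proof -
    have *: "x \<in> (\<Union>n. {0..b n})" if "0 \<le> x" "x < 1" for x
    proof -
      obtain n where n: "1 / (1 - x) \<le> real n" using real_arch_simple by blast
      have "1 / (real n + 2) \<le> 1 - x"
        using n that by (simp add: field_simps)
      then have "x \<le> b n" unfolding b_def by simp
      then show ?thesis using that by auto
    qed
    show ?thesis
    proof (rule set_eqI, rule iffI)
      fix x :: real assume "x \<in> (\<Union>n. {0..b n})"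
      then obtain n where "0 \<le> x" "x \<le> b n" by auto
      then show "x \<in> {0..<1}" using b[of n] by auto
    next
      fix x :: real assume "x \<in> {0..<1}"
      then show "x \<in> (\<Union>n. {0..b n})" using * by auto
    qed
  qed
  have "(\<integral>\<^sup>+ u. ennreal (F u) \<partial>lborel) = (\<integral>\<^sup>+ u. ennreal (F u * indicator {0..} u) \<partial>lborel)"
    by (intro nn_integral_cong) (auto simp: F_def rho_def indicator_def)
  also have "\<dots> = (SUP n. \<integral>\<^sup>+ u. ennreal (F u * indicator {0..v * (real n + 1)} u) \<partial>lborel)"
    by (subst mono_conv_ind[OF inc1 Fn Fm]) (auto simp: U1)
  also have "\<dots> = (SUP n. \<integral>\<^sup>+ r. ennreal (K r * indicator {0..b n} r) \<partial>lborel)"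
    by (simp add: step)
  also have "\<dots> = (\<integral>\<^sup>+ r. ennreal (K r * indicator {0..<1} r) \<partial>lborel)"
    by (subst mono_conv_ind[OF inc2 Kn Km]) (auto simp: U2)
  also have "\<dots> = (\<integral>\<^sup>+ r. ennreal (rho d r * indicator {..<1} r * Jac v d r * H r (v * r / (1 - r))) \<partial>lborel)"
    by (intro nn_integral_cong) (auto simp: K_def g_def rho_def indicator_def)
  finally show ?thesis by (simp add: F_def)
qed

lemma Gcomp:
  assumes G: "(\<lambda>p. G (fst p) (snd p)) \<in> borel_measurable (M2 \<Otimes>\<^sub>M borel)"
    and f: "f \<in> measurable M M2" and g: "g \<in> borel_measurable M"
  shows "(\<lambda>x. G (f x) (g x)) \<in> borel_measurable M"
proof -
  have "(\<lambda>x. (f x, g x)) \<in> measurable M (M2 \<Otimes>\<^sub>M borel)" using f g by measurable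
  from measurable_comp[OF this G] show ?thesis by (simp add: o_def)
qed

definition Tv :: "'a set \<Rightarrow> real \<Rightarrow> ('a \<Rightarrow> real) \<Rightarrow> ('a \<Rightarrow> real)" where
  "Tv I v x = restrict (\<lambda>j. x j / sqrt (v + sqn I x)) I"

lemma Tv_measurable[measurable]: "finite I \<Longrightarrow> Tv I v \<in> measurable (LL I) (LL I)"
  unfolding Tv_def by measurable

lemma scl_u_measurable[measurable]: "(\<lambda>u. scl I (f u) w) \<in> measurable borel (LL I)"
  if "f \<in> borel_measurable borel" for f :: "real \<Rightarrow> real"
  unfolding scl_def using that by measurable

lemma Tv_scl:
  assumes "sqn I w = 1" "u > 0" "v > 0"
  shows "Tv I v (scl I (sqrt u) w) = scl I (sqrt (u / (v + u))) w"
proof -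
  have "sqn I (scl I (sqrt u) w) = u" using assms by (simp add: sqn_scl)
  then show ?thesis unfolding Tv_def using assms by (simp add: scl_def fun_eq_iff real_sqrt_divide)
qed

theorem blockB:
  fixes I :: "'a set" and G :: "('a \<Rightarrow> real) \<Rightarrow> real \<Rightarrow> real"
  assumes I: "finite I" "I \<noteq> {}" and v: "v > 0"
    and Gm: "(\<lambda>p. G (fst p) (snd p)) \<in> borel_measurable (LL I \<Otimes>\<^sub>M borel)"
    and Gn: "\<And>R s. 0 \<le> G R s"
  shows "(\<integral>\<^sup>+ x. ennreal (G (Tv I v x) (sqn I x)) \<partial>LL I)
       = (\<integral>\<^sup>+ R. ennreal (indicator {R. sqn I R < 1} R * Jac v (card I) (sqn I R)
              * G R (v * sqn I R / (1 - sqn I R))) \<partial>LL I)"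
proof -
  let ?d = "card I"
  define H where "H w r u = G (scl I (sqrt r) w) u" for w r u
  have Hm: "(\<lambda>p. H w (fst p) (snd p)) \<in> borel_measurable (borel \<Otimes>\<^sub>M borel)" for w
    unfolding H_def by (rule Gcomp[OF Gm]) measurable
  have Hn: "0 \<le> H w r u" for w r u unfolding H_def by (rule Gn)
  have m1: "(\<lambda>x. ennreal (G (Tv I v x) (sqn I x))) \<in> borel_measurable (LL I)"
  proof -
    have "(\<lambda>x. G (Tv I v x) (sqn I x)) \<in> borel_measurable (LL I)"
      by (rule Gcomp[OF Gm]) (use I in auto)
    then show ?thesis by (rule measurable_compose[OF _ measurable_ennreal])
  qed
  have m2: "(\<lambda>R. ennreal (indicator {R. sqn I R < 1} R * Jac v (card I) (sqn I R)
              * G R (v * sqn I R / (1 - sqn I R)))) \<in> borel_measurable (LL I)"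
  proof -
    have "(\<lambda>R. G R (v * sqn I R / (1 - sqn I R))) \<in> borel_measurable (LL I)"
      using I by (intro Gcomp[OF Gm]) auto
    moreover have "(\<lambda>R. indicator {R. sqn I R < 1} R * Jac v (card I) (sqn I R)) \<in> borel_measurable (LL I)"
    proof -
      have "{R \<in> space (LL I). sqn I R < 1} \<in> sets (LL I)" using I by measurable
      then have "(indicator {R \<in> space (LL I). sqn I R < 1} :: _ \<Rightarrow> real) \<in> borel_measurable (LL I)"
        by simp
      moreover have "indicator {R. sqn I R < 1} R = (indicator {R \<in> space (LL I). sqn I R < 1} R :: real)"
        if "R \<in> space (LL I)" for R using that by (simp add: indicator_def)
      ultimately show ?thesis using I unfolding Jac_def
        by (subst measurable_cong[where g="\<lambda>R. indicator {R \<in> space (LL I). sqn I R < 1} R * (v powr (real (card I) / 2) * (1 - sqn I R) powr (- (real (card I) / 2) - 1))"]) auto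
    qed
    ultimately show ?thesis by measurable
  qed
  have inner: "(\<integral>\<^sup>+ u. ennreal (G (Tv I v (scl I (sqrt u) w)) (sqn I (scl I (sqrt u) w))) \<partial>nu ?d)
     = (\<integral>\<^sup>+ u. ennreal (indicator {R. sqn I R < 1} (scl I (sqrt u) w) * Jac v ?d (sqn I (scl I (sqrt u) w))
              * G (scl I (sqrt u) w) (v * sqn I (scl I (sqrt u) w) / (1 - sqn I (scl I (sqrt u) w)))) \<partial>nu ?d)"
    if w: "sqn I w = 1" for w
  proof -
    have "(\<integral>\<^sup>+ u. ennreal (G (Tv I v (scl I (sqrt u) w)) (sqn I (scl I (sqrt u) w))) \<partial>nu ?d)
        = (\<integral>\<^sup>+ u. ennreal (H w (u / (v + u)) u) \<partial>nu ?d)"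
    proof (rule nn_integral_cong_AE)
      show "AE u in nu ?d. ennreal (G (Tv I v (scl I (sqrt u) w)) (sqn I (scl I (sqrt u) w))) = ennreal (H w (u / (v + u)) u)"
        using AE_nu_pos[of ?d] by (rule AE_mp) (auto intro!: AE_I2 simp: Tv_scl w v sqn_scl H_def)
    qed
    also have "\<dots> = (\<integral>\<^sup>+ u. ennreal (rho ?d u * H w (u / (v + u)) u) \<partial>lborel)"
    proof -
      have "(\<lambda>u. H w (u / (v + u)) u) \<in> borel_measurable borel" by (rule Gcomp[OF Hm]) auto
      then show ?thesis unfolding nu_def
        by (subst nn_integral_density) (auto intro!: nn_integral_cong simp: ennreal_mult rho_nonneg Hn)
    qed
    also have "\<dots> = (\<integral>\<^sup>+ r. ennreal (rho ?d r * indicator {..<1} r * Jac v ?d r * H w r (v * r / (1 - r))) \<partial>lborel)"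
      by (rule subst1[OF v Hm Hn])
    also have "\<dots> = (\<integral>\<^sup>+ r. ennreal (indicator {..<1} r * Jac v ?d r * H w r (v * r / (1 - r))) \<partial>nu ?d)"
    proof -
      have mH: "(\<lambda>r. H w r (v * r / (1 - r))) \<in> borel_measurable borel" by (rule Gcomp[OF Hm]) auto
      have mI: "(\<lambda>r. indicator {..<1} r * Jac v ?d r * H w r (v * r / (1 - r))) \<in> borel_measurable borel"
        using mH unfolding Jac_def by measurable
      have Jn: "0 \<le> Jac v ?d r" for r by (simp add: Jac_def)
      have mI': "(\<lambda>r. ennreal (indicator {..<1} r * Jac v ?d r * H w r (v * r / (1 - r)))) \<in> borel_measurable borel"
        using mI by (rule measurable_compose[OF _ measurable_ennreal])
      have "(\<integral>\<^sup>+ r. ennreal (indicator {..<1} r * Jac v ?d r * H w r (v * r / (1 - r))) \<partial>density lborel (\<lambda>u. ennreal (rho ?d u)))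
          = (\<integral>\<^sup>+ r. ennreal (rho ?d r) * ennreal (indicator {..<1} r * Jac v ?d r * H w r (v * r / (1 - r))) \<partial>lborel)"
        by (rule nn_integral_density) (auto intro: mI')
      also have "\<dots> = (\<integral>\<^sup>+ r. ennreal (rho ?d r * indicator {..<1} r * Jac v ?d r * H w r (v * r / (1 - r))) \<partial>lborel)"
        by (intro nn_integral_cong) (simp add: ennreal_mult Jn Hn rho_nonneg mult.assoc)
      finally show ?thesis unfolding nu_def by simp

    qed
    also have "\<dots> = (\<integral>\<^sup>+ u. ennreal (indicator {R. sqn I R < 1} (scl I (sqrt u) w) * Jac v ?d (sqn I (scl I (sqrt u) w))
              * G (scl I (sqrt u) w) (v * sqn I (scl I (sqrt u) w) / (1 - sqn I (scl I (sqrt u) w)))) \<partial>nu ?d)"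
    proof (rule nn_integral_cong_AE)
      show "AE r in nu ?d. ennreal (indicator {..<1} r * Jac v ?d r * H w r (v * r / (1 - r))) =
         ennreal (indicator {R. sqn I R < 1} (scl I (sqrt r) w) * Jac v ?d (sqn I (scl I (sqrt r) w))
              * G (scl I (sqrt r) w) (v * sqn I (scl I (sqrt r) w) / (1 - sqn I (scl I (sqrt r) w))))"
        using AE_nu_pos[of ?d] by (rule AE_mp) (auto intro!: AE_I2 simp: w sqn_scl H_def indicator_def)
    qed
    finally show ?thesis .
  qed
  have "(\<integral>\<^sup>+ x. ennreal (G (Tv I v x) (sqn I x)) \<partial>LL I)
      = (\<integral>\<^sup>+ w. \<integral>\<^sup>+ u. ennreal (G (Tv I v (scl I (sqrt u) w)) (sqn I (scl I (sqrt u) w))) \<partial>nu ?d \<partial>sig I)"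
    by (rule polar_nn_integral[OF I m1])
  also have "\<dots> = (\<integral>\<^sup>+ w. \<integral>\<^sup>+ u. ennreal (indicator {R. sqn I R < 1} (scl I (sqrt u) w) * Jac v ?d (sqn I (scl I (sqrt u) w))
              * G (scl I (sqrt u) w) (v * sqn I (scl I (sqrt u) w) / (1 - sqn I (scl I (sqrt u) w)))) \<partial>nu ?d \<partial>sig I)"
    by (intro nn_integral_cong_AE, rule AE_mp[OF AE_sig_sphere[OF I]]) (auto intro!: AE_I2 simp: inner)
  also have "\<dots> = (\<integral>\<^sup>+ R. ennreal (indicator {R. sqn I R < 1} R * Jac v (card I) (sqn I R)
              * G R (v * sqn I R / (1 - sqn I R))) \<partial>LL I)"
    by (rule polar_nn_integral[OF I m2, symmetric])
  finally show ?thesis .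
qed

definition ix :: "(nat \<Rightarrow> nat) \<Rightarrow> nat \<Rightarrow> nat set \<Rightarrow> (nat \<times> nat \<times> nat) set" where
  "ix n m K = {(i, r, c). i \<in> K \<and> r < n i \<and> c < m}"

definition TT :: "(nat \<Rightarrow> nat) \<Rightarrow> nat \<Rightarrow> real \<Rightarrow> nat set \<Rightarrow> ((nat \<times> nat \<times> nat) \<Rightarrow> real) \<Rightarrow> ((nat \<times> nat \<times> nat) \<Rightarrow> real)" where
  "TT n m v K z = restrict (\<lambda>(i, r, c). z (i, r, c) / sqrt (v + R_sq n m z i)) (ix n m K)"

definition SS :: "(nat \<Rightarrow> nat) \<Rightarrow> nat \<Rightarrow> nat set \<Rightarrow> ((nat \<times> nat \<times> nat) \<Rightarrow> real) \<Rightarrow> real" where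
  "SS n m K z = (\<Sum>i\<in>K. R_sq n m z i)"

definition WW :: "(nat \<Rightarrow> nat) \<Rightarrow> nat \<Rightarrow> real \<Rightarrow> nat set \<Rightarrow> ((nat \<times> nat \<times> nat) \<Rightarrow> real) \<Rightarrow> real" where
  "WW n m v K R = (\<Prod>i\<in>K. indicator {..<1} (R_sq n m R i) * Jac v (n i * m) (R_sq n m R i))"

definition QQ :: "(nat \<Rightarrow> nat) \<Rightarrow> nat \<Rightarrow> nat set \<Rightarrow> ((nat \<times> nat \<times> nat) \<Rightarrow> real) \<Rightarrow> real" where
  "QQ n m K R = (\<Sum>i\<in>K. R_sq n m R i / (1 - R_sq n m R i))"

definition MB :: "(nat \<Rightarrow> nat) \<Rightarrow> nat \<Rightarrow> real \<Rightarrow> nat set \<Rightarrow> bool" where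
  "MB n m v K \<longleftrightarrow> (\<forall>G. (\<lambda>p. G (fst p) (snd p)) \<in> borel_measurable (LL (ix n m K) \<Otimes>\<^sub>M borel) \<longrightarrow> (\<forall>R s. 0 \<le> G R s) \<longrightarrow>
     (\<integral>\<^sup>+ z. ennreal (G (TT n m v K z) (SS n m K z)) \<partial>LL (ix n m K))
     = (\<integral>\<^sup>+ R. ennreal (WW n m v K R * G R (v * QQ n m K R)) \<partial>LL (ix n m K)))"

lemma finite_ix: "finite K \<Longrightarrow> finite (ix n m K)"
proof -
  assume K: "finite K"
  have "ix n m K \<subseteq> K \<times> {..<Max (n ` K)} \<times> {..<m}"
    using K by (auto simp: ix_def intro: less_le_trans[OF _ Max_ge])
  then show ?thesis by (rule finite_subset) (use K in auto)
qed

lemma ix_union: "ix n m (K1 \<union> K2) = ix n m K1 \<union> ix n m K2"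
  by (auto simp: ix_def)

lemma ix_disj: "K1 \<inter> K2 = {} \<Longrightarrow> ix n m K1 \<inter> ix n m K2 = {}"
  by (auto simp: ix_def)

lemma R_sq_measurable[measurable]: "finite K \<Longrightarrow> i \<in> K \<Longrightarrow> (\<lambda>z. R_sq n m z i) \<in> borel_measurable (LL (ix n m K))"
  unfolding R_sq_def by (intro borel_measurable_sum borel_measurable_power measurable_PiM_component_rev)
    (auto simp: ix_def)

lemma SS_measurable[measurable]: "finite K \<Longrightarrow> SS n m K \<in> borel_measurable (LL (ix n m K))"
  unfolding SS_def by (intro borel_measurable_sum) auto

lemma QQ_measurable[measurable]: "finite K \<Longrightarrow> QQ n m K \<in> borel_measurable (LL (ix n m K))"
  unfolding QQ_def by (intro borel_measurable_sum borel_measurable_divide borel_measurable_diff) auto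

lemma WW_measurable[measurable]: "finite K \<Longrightarrow> WW n m v K \<in> borel_measurable (LL (ix n m K))"
  unfolding WW_def Jac_def by (intro borel_measurable_prod borel_measurable_times) auto

lemma TT_measurable[measurable]:
  assumes K: "finite K"
  shows "TT n m v K \<in> measurable (LL (ix n m K)) (LL (ix n m K))"
  unfolding TT_def
proof (rule measurable_restrict)
  fix j assume j: "j \<in> ix n m K"
  obtain i r c where jj: "j = (i, r, c)" by (cases j) auto
  have i: "i \<in> K" using j jj by (auto simp: ix_def)
  have m1: "(\<lambda>x. x (i, r, c)) \<in> borel_measurable (LL (ix n m K))"
    using j jj by (intro measurable_PiM_component_rev) auto
  have m2: "(\<lambda>x. R_sq n m x i) \<in> borel_measurable (LL (ix n m K))"
    by (rule R_sq_measurable[OF K i])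
  note [measurable] = m1 m2
  have "(\<lambda>x. x (i, r, c) / sqrt (v + R_sq n m x i)) \<in> borel_measurable (LL (ix n m K))"
    by measurable
  then show "(\<lambda>x. case j of (i, r, c) \<Rightarrow> x (i, r, c) / sqrt (v + R_sq n m x i)) \<in> measurable (LL (ix n m K)) lborel"
    using jj by simp
qed

lemma WW_nonneg: "0 \<le> WW n m v K R"
  unfolding WW_def Jac_def by (intro prod_nonneg) (auto simp: indicator_def)

lemma ix1_eq: "ix n m {a} = (\<lambda>(r, c). (a, r, c)) ` ({..<n a} \<times> {..<m})"
  by (auto simp: ix_def image_iff)

lemma ix1_inj: "inj_on (\<lambda>(r, c). (a::nat, r::nat, c::nat)) X"
  by (auto simp: inj_on_def)

lemma sqn_ix1: "sqn (ix n m {a}) z = R_sq n m z a"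
proof -
  have "sqn (ix n m {a}) z = (\<Sum>(r, c)\<in>{..<n a} \<times> {..<m}. (z (a, r, c))\<^sup>2)"
    unfolding sqn_def ix1_eq by (subst sum.reindex[OF ix1_inj]) (simp add: case_prod_beta o_def)
  also have "\<dots> = R_sq n m z a"
    unfolding R_sq_def by (simp add: sum.cartesian_product)
  finally show ?thesis .
qed

lemma card_ix1: "card (ix n m {a}) = n a * m"
  unfolding ix1_eq by (subst card_image[OF ix1_inj]) (simp add: card_cartesian_product)

lemma ix1_ne: "1 \<le> n a * m \<Longrightarrow> ix n m {a} \<noteq> {}"
  using card_ix1[of n m a] by auto

lemma MB_single:
  assumes v: "v > 0" and a: "1 \<le> n a * m"
  shows "MB n m v {a}"
  unfolding MB_def
proof (intro allI impI)
  fix G :: "((nat \<times> nat \<times> nat) \<Rightarrow> real) \<Rightarrow> real \<Rightarrow> real"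
  assume Gm: "(\<lambda>p. G (fst p) (snd p)) \<in> borel_measurable (LL (ix n m {a}) \<Otimes>\<^sub>M borel)"
    and Gn: "\<forall>R s. 0 \<le> G R s"
  let ?I = "ix n m {a}"
  have fin: "finite ?I" by (rule finite_ix) simp
  have B: "(\<integral>\<^sup>+ x. ennreal (G (Tv ?I v x) (sqn ?I x)) \<partial>LL ?I)
       = (\<integral>\<^sup>+ R. ennreal (indicator {R. sqn ?I R < 1} R * Jac v (card ?I) (sqn ?I R)
              * G R (v * sqn ?I R / (1 - sqn ?I R))) \<partial>LL ?I)"
    using Gn by (intro blockB[OF fin ix1_ne[of n a m, OF a] v Gm]) auto
  have T: "Tv ?I v z = TT n m v {a} z" for z
    unfolding Tv_def TT_def sqn_ix1 by (auto simp: ix_def fun_eq_iff)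
  show "(\<integral>\<^sup>+ z. ennreal (G (TT n m v {a} z) (SS n m {a} z)) \<partial>LL ?I)
     = (\<integral>\<^sup>+ R. ennreal (WW n m v {a} R * G R (v * QQ n m {a} R)) \<partial>LL ?I)"
    using B by (simp add: T sqn_ix1 SS_def WW_def QQ_def card_ix1 indicator_def)
qed

lemma merge_R_sq1: "K1 \<inter> K2 = {} \<Longrightarrow> i \<in> K1 \<Longrightarrow> R_sq n m (merge (ix n m K1) (ix n m K2) (x, y)) i = R_sq n m x i"
  unfolding R_sq_def by (intro sum.cong refl) (auto simp: merge_def ix_def)

lemma merge_R_sq2: "K1 \<inter> K2 = {} \<Longrightarrow> i \<in> K2 \<Longrightarrow> R_sq n m (merge (ix n m K1) (ix n m K2) (x, y)) i = R_sq n m y i"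
  unfolding R_sq_def by (intro sum.cong refl) (auto simp: merge_def ix_def)

lemma merge_TT:
  assumes "K1 \<inter> K2 = {}"
  shows "TT n m v (K1 \<union> K2) (merge (ix n m K1) (ix n m K2) (x, y))
       = merge (ix n m K1) (ix n m K2) (TT n m v K1 x, TT n m v K2 y)"
proof
  fix j :: "nat \<times> nat \<times> nat"
  obtain i r c where j: "j = (i, r, c)" by (cases j) auto
  show "TT n m v (K1 \<union> K2) (merge (ix n m K1) (ix n m K2) (x, y)) j
       = merge (ix n m K1) (ix n m K2) (TT n m v K1 x, TT n m v K2 y) j"
    using assms merge_R_sq1[OF assms, of i n m x y] merge_R_sq2[OF assms, of i n m x y]
    by (auto simp: j TT_def merge_def ix_def)
qed

lemma merge_SS: "K1 \<inter> K2 = {} \<Longrightarrow> finite K1 \<Longrightarrow> finite K2 \<Longrightarrow>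
  SS n m (K1 \<union> K2) (merge (ix n m K1) (ix n m K2) (x, y)) = SS n m K1 x + SS n m K2 y"
  unfolding SS_def by (simp add: sum.union_disjoint merge_R_sq1 merge_R_sq2 cong: sum.cong)

lemma merge_QQ: "K1 \<inter> K2 = {} \<Longrightarrow> finite K1 \<Longrightarrow> finite K2 \<Longrightarrow>
  QQ n m (K1 \<union> K2) (merge (ix n m K1) (ix n m K2) (x, y)) = QQ n m K1 x + QQ n m K2 y"
  unfolding QQ_def by (simp add: sum.union_disjoint merge_R_sq1 merge_R_sq2 cong: sum.cong)

lemma merge_WW: "K1 \<inter> K2 = {} \<Longrightarrow> finite K1 \<Longrightarrow> finite K2 \<Longrightarrow>
  WW n m v (K1 \<union> K2) (merge (ix n m K1) (ix n m K2) (x, y)) = WW n m v K1 x * WW n m v K2 y"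
  unfolding WW_def by (simp add: prod.union_disjoint merge_R_sq1 merge_R_sq2 cong: prod.cong)

lemma merge_meas1:
  "c \<in> space (LL A) \<Longrightarrow> (\<lambda>R. merge A B (c, R)) \<in> measurable (LL B) (LL (A \<union> B))"
  by measurable

lemma merge_meas2:
  "c \<in> space (LL B) \<Longrightarrow> (\<lambda>R. merge A B (R, c)) \<in> measurable (LL A) (LL (A \<union> B))"
  by measurable

lemma MB_union:
  assumes K: "finite K1" "finite K2" "K1 \<inter> K2 = {}" and M1: "MB n m v K1" and M2: "MB n m v K2"
  shows "MB n m v (K1 \<union> K2)"
  unfolding MB_def
proof (intro allI impI)
  fix G :: "((nat \<times> nat \<times> nat) \<Rightarrow> real) \<Rightarrow> real \<Rightarrow> real"
  assume Gm: "(\<lambda>p. G (fst p) (snd p)) \<in> borel_measurable (LL (ix n m (K1 \<union> K2)) \<Otimes>\<^sub>M borel)"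
    and Gn: "\<forall>R s. 0 \<le> G R s"
  define A where "A = ix n m K1"
  define B where "B = ix n m K2"
  have AB: "A \<inter> B = {}" "finite A" "finite B" "ix n m (K1 \<union> K2) = A \<union> B"
    using K by (auto simp: A_def B_def ix_disj finite_ix ix_union)
  note Gm' = Gm[unfolded AB(4)]
  interpret ps: pair_sigma_finite "LL A" "LL B"
    using AB by (intro pair_sigma_finite.intro LLps.sigma_finite) auto
  have TT1: "TT n m v K1 \<in> measurable (LL A) (LL A)" unfolding A_def using K by simp
  have TT2: "TT n m v K2 \<in> measurable (LL B) (LL B)" unfolding B_def using K by simp
  have SS1: "SS n m K1 \<in> borel_measurable (LL A)" unfolding A_def using K by simp
  have SS2: "SS n m K2 \<in> borel_measurable (LL B)" unfolding B_def using K by simp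
  have QQ1: "QQ n m K1 \<in> borel_measurable (LL A)" unfolding A_def using K by simp
  have QQ2: "QQ n m K2 \<in> borel_measurable (LL B)" unfolding B_def using K by simp
  have WW1: "WW n m v K1 \<in> borel_measurable (LL A)" unfolding A_def using K by simp
  have WW2: "WW n m v K2 \<in> borel_measurable (LL B)" unfolding B_def using K by simp
  note [measurable] = TT1 TT2 SS1 SS2 QQ1 QQ2 WW1 WW2
  have TTs: "TT n m v K1 x \<in> space (LL A)" if "x \<in> space (LL A)" for x
    using measurable_space[OF TT1 that] .
  define \<Phi> where "\<Phi> p = ennreal (WW n m v K2 (snd p) * G (merge A B (TT n m v K1 (fst p), snd p))
      (SS n m K1 (fst p) + v * QQ n m K2 (snd p)))" for p
  have \<Phi>m: "\<Phi> \<in> borel_measurable (LL A \<Otimes>\<^sub>M LL B)"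
  proof -
    have "(\<lambda>p. G (merge A B (TT n m v K1 (fst p), snd p)) (SS n m K1 (fst p) + v * QQ n m K2 (snd p)))
        \<in> borel_measurable (LL A \<Otimes>\<^sub>M LL B)"
      by (rule Gcomp[OF Gm']) measurable
    then show ?thesis unfolding \<Phi>_def by measurable
  qed
  define \<Psi> where "\<Psi> p = ennreal (WW n m v K1 (fst p) * (WW n m v K2 (snd p) * G (merge A B (fst p, snd p))
      (v * QQ n m K1 (fst p) + v * QQ n m K2 (snd p))))" for p
  have \<Psi>m: "\<Psi> \<in> borel_measurable (LL A \<Otimes>\<^sub>M LL B)"
  proof -
    have "(\<lambda>p. G (merge A B (fst p, snd p)) (v * QQ n m K1 (fst p) + v * QQ n m K2 (snd p)))
        \<in> borel_measurable (LL A \<Otimes>\<^sub>M LL B)"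
      by (rule Gcomp[OF Gm']) measurable
    then show ?thesis unfolding \<Psi>_def by measurable
  qed
  have lhs_m: "(\<lambda>z. ennreal (G (TT n m v (K1 \<union> K2) z) (SS n m (K1 \<union> K2) z))) \<in> borel_measurable (LL (A \<union> B))"
  proof -
    have "(\<lambda>z. G (TT n m v (K1 \<union> K2) z) (SS n m (K1 \<union> K2) z)) \<in> borel_measurable (LL (A \<union> B))"
      using K AB by (intro Gcomp[OF Gm']) (auto simp flip: AB(4))
    then show ?thesis by measurable
  qed
  have rhs_m: "(\<lambda>z. ennreal (WW n m v (K1 \<union> K2) z * G z (v * QQ n m (K1 \<union> K2) z))) \<in> borel_measurable (LL (A \<union> B))"
  proof -
    have "(\<lambda>z. G z (v * QQ n m (K1 \<union> K2) z)) \<in> borel_measurable (LL (A \<union> B))"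
      using K AB by (intro Gcomp[OF Gm']) (auto simp flip: AB(4))
    moreover have "WW n m v (K1 \<union> K2) \<in> borel_measurable (LL (A \<union> B))"
      using K by (simp flip: AB(4))
    ultimately show ?thesis by measurable
  qed
  have "(\<integral>\<^sup>+ z. ennreal (G (TT n m v (K1 \<union> K2) z) (SS n m (K1 \<union> K2) z)) \<partial>LL (A \<union> B))
      = (\<integral>\<^sup>+ x. \<integral>\<^sup>+ y. ennreal (G (TT n m v (K1 \<union> K2) (merge A B (x, y))) (SS n m (K1 \<union> K2) (merge A B (x, y)))) \<partial>LL B \<partial>LL A)"
    using AB lhs_m by (intro LLps.product_nn_integral_fold) auto
  also have "\<dots> = (\<integral>\<^sup>+ x. \<integral>\<^sup>+ y. \<Phi> (x, y) \<partial>LL B \<partial>LL A)"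
  proof (rule nn_integral_cong)
    fix x assume x: "x \<in> space (LL A)"
    define Gx where "Gx R s = G (merge A B (TT n m v K1 x, R)) (SS n m K1 x + s)" for R s
    have Gxm: "(\<lambda>p. Gx (fst p) (snd p)) \<in> borel_measurable (LL B \<Otimes>\<^sub>M borel)"
    proof -
      note [measurable] = merge_meas1[OF TTs[OF x], of B]
      show ?thesis unfolding Gx_def by (rule Gcomp[OF Gm']) measurable
    qed
    have "(\<integral>\<^sup>+ y. ennreal (G (TT n m v (K1 \<union> K2) (merge A B (x, y))) (SS n m (K1 \<union> K2) (merge A B (x, y)))) \<partial>LL B)
        = (\<integral>\<^sup>+ y. ennreal (Gx (TT n m v K2 y) (SS n m K2 y)) \<partial>LL B)"
      unfolding Gx_def A_def B_def using K by (simp add: merge_TT merge_SS)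
    also have "\<dots> = (\<integral>\<^sup>+ y. ennreal (WW n m v K2 y * Gx y (v * QQ n m K2 y)) \<partial>LL B)"
      by (rule M2[unfolded MB_def, folded B_def, rule_format, OF Gxm]) (use Gn in \<open>auto simp: Gx_def\<close>)
    also have "\<dots> = (\<integral>\<^sup>+ y. \<Phi> (x, y) \<partial>LL B)"
      unfolding \<Phi>_def Gx_def by simp
    finally show "(\<integral>\<^sup>+ y. ennreal (G (TT n m v (K1 \<union> K2) (merge A B (x, y))) (SS n m (K1 \<union> K2) (merge A B (x, y)))) \<partial>LL B)
        = (\<integral>\<^sup>+ y. \<Phi> (x, y) \<partial>LL B)" .
  qed
  also have "\<dots> = (\<integral>\<^sup>+ y. \<integral>\<^sup>+ x. \<Phi> (x, y) \<partial>LL A \<partial>LL B)"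
    by (rule ps.Fubini[OF \<Phi>m, symmetric])
  also have "\<dots> = (\<integral>\<^sup>+ y. \<integral>\<^sup>+ x. \<Psi> (x, y) \<partial>LL A \<partial>LL B)"
  proof (rule nn_integral_cong)
    fix y assume y: "y \<in> space (LL B)"
    define Gy where "Gy R s = WW n m v K2 y * G (merge A B (R, y)) (s + v * QQ n m K2 y)" for R s
    have Gym: "(\<lambda>p. Gy (fst p) (snd p)) \<in> borel_measurable (LL A \<Otimes>\<^sub>M borel)"
    proof -
      note [measurable] = merge_meas2[OF y, of A]
      have "(\<lambda>p. G (merge A B (fst p, y)) (snd p + v * QQ n m K2 y)) \<in> borel_measurable (LL A \<Otimes>\<^sub>M borel)"
        by (rule Gcomp[OF Gm']) measurable
      then show ?thesis unfolding Gy_def by measurable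
    qed
    have Gyn: "\<forall>R s. 0 \<le> Gy R s" unfolding Gy_def using Gn WW_nonneg by (auto intro: mult_nonneg_nonneg)
    have "(\<integral>\<^sup>+ x. \<Phi> (x, y) \<partial>LL A) = (\<integral>\<^sup>+ x. ennreal (Gy (TT n m v K1 x) (SS n m K1 x)) \<partial>LL A)"
      unfolding \<Phi>_def Gy_def by simp
    also have "\<dots> = (\<integral>\<^sup>+ x. ennreal (WW n m v K1 x * Gy x (v * QQ n m K1 x)) \<partial>LL A)"
      by (rule M1[unfolded MB_def, folded A_def, rule_format, OF Gym]) (use Gyn in auto)
    also have "\<dots> = (\<integral>\<^sup>+ x. \<Psi> (x, y) \<partial>LL A)"
      unfolding \<Psi>_def Gy_def by simp
    finally show "(\<integral>\<^sup>+ x. \<Phi> (x, y) \<partial>LL A) = (\<integral>\<^sup>+ x. \<Psi> (x, y) \<partial>LL A)" .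
  qed
  also have "\<dots> = (\<integral>\<^sup>+ x. \<integral>\<^sup>+ y. \<Psi> (x, y) \<partial>LL B \<partial>LL A)"
    by (rule ps.Fubini[OF \<Psi>m])
  also have "\<dots> = (\<integral>\<^sup>+ x. \<integral>\<^sup>+ y. ennreal (WW n m v (K1 \<union> K2) (merge A B (x, y)) * G (merge A B (x, y)) (v * QQ n m (K1 \<union> K2) (merge A B (x, y)))) \<partial>LL B \<partial>LL A)"
    unfolding \<Psi>_def A_def B_def using K by (simp add: merge_WW merge_QQ distrib_left mult.assoc)
  also have "\<dots> = (\<integral>\<^sup>+ z. ennreal (WW n m v (K1 \<union> K2) z * G z (v * QQ n m (K1 \<union> K2) z)) \<partial>LL (A \<union> B))"
    using AB rhs_m by (intro LLps.product_nn_integral_fold[symmetric]) auto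
  finally show "(\<integral>\<^sup>+ z. ennreal (G (TT n m v (K1 \<union> K2) z) (SS n m (K1 \<union> K2) z)) \<partial>LL (ix n m (K1 \<union> K2)))
     = (\<integral>\<^sup>+ R. ennreal (WW n m v (K1 \<union> K2) R * G R (v * QQ n m (K1 \<union> K2) R)) \<partial>LL (ix n m (K1 \<union> K2)))"
    unfolding AB(4) .
qed

lemma MB_empty: "MB n m v {}"
  unfolding MB_def
proof (intro allI impI)
  fix G :: "((nat \<times> nat \<times> nat) \<Rightarrow> real) \<Rightarrow> real \<Rightarrow> real"
  have "TT n m v {} z = z" if "z \<in> space (LL (ix n m {}))" for z
  proof -
    have e: "ix n m {} = {}" by (simp add: ix_def)
    show ?thesis using that unfolding TT_def e by (auto simp: space_PiM PiE_iff extensional_def fun_eq_iff)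
  qed
  then show "(\<integral>\<^sup>+ z. ennreal (G (TT n m v {} z) (SS n m {} z)) \<partial>LL (ix n m {}))
     = (\<integral>\<^sup>+ R. ennreal (WW n m v {} R * G R (v * QQ n m {} R)) \<partial>LL (ix n m {}))"
    by (intro nn_integral_cong) (simp add: SS_def WW_def QQ_def)
qed

theorem MB_all:
  assumes K: "finite K" and v: "v > 0" and pos: "\<And>i. i \<in> K \<Longrightarrow> 1 \<le> n i * m"
  shows "MB n m v K"
  using K pos
proof (induction K rule: finite_induct)
  case empty
  show ?case by (rule MB_empty)
next
  case (insert a K)
  have "MB n m v ({a} \<union> K)"
    using insert by (intro MB_union MB_single v) auto
  then show ?case by simp
qed

lemma reindex_LL:
  fixes f :: "'a \<Rightarrow> 'b" and I :: "'a set" and K :: "'b set"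
  assumes I: "finite I" and f: "bij_betw f I K"
  shows "distr (LL K) (LL I) (\<lambda>\<omega>. restrict (\<lambda>i. \<omega> (f i)) I) = LL I"
proof (rule LLps.PiM_eqI[OF I])
  have K: "finite K" using f I bij_betw_finite by blast
  show "sets (distr (LL K) (LL I) (\<lambda>\<omega>. restrict (\<lambda>i. \<omega> (f i)) I)) = sets (LL I)" by simp
  fix A :: "'a \<Rightarrow> real set" assume A: "\<And>i. i \<in> I \<Longrightarrow> A i \<in> sets lborel"
  define g where "g = the_inv_into I f"
  have fg: "f (g k) = k" if "k \<in> K" for k
    using f that unfolding g_def by (auto simp: bij_betw_def f_the_inv_into_f)
  have gI: "g k \<in> I" if "k \<in> K" for k
    using f that unfolding g_def by (auto simp: bij_betw_def intro: the_inv_into_into)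
  have gf: "g (f i) = i" if "i \<in> I" for i
    using f that unfolding g_def by (auto simp: bij_betw_def the_inv_into_f_f)
  have fI: "f i \<in> K" if "i \<in> I" for i using f that by (auto simp: bij_betw_def)
  have meas: "(\<lambda>\<omega>. restrict (\<lambda>i. \<omega> (f i)) I) \<in> measurable (LL K) (LL I)"
    by (rule measurable_restrict) (use fI in auto)
  have pre: "(\<lambda>\<omega>. restrict (\<lambda>i. \<omega> (f i)) I) -` Pi\<^sub>E I A \<inter> space (LL K) = Pi\<^sub>E K (\<lambda>k. A (g k))"
    using fg gI gf fI by (auto simp: space_PiM PiE_iff Pi_iff extensional_def) (metis gf)+
  have "emeasure (distr (LL K) (LL I) (\<lambda>\<omega>. restrict (\<lambda>i. \<omega> (f i)) I)) (Pi\<^sub>E I A)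
      = emeasure (LL K) (Pi\<^sub>E K (\<lambda>k. A (g k)))"
    using A I by (subst emeasure_distr[OF meas]) (auto simp: pre intro!: sets_PiM_I_finite)
  also have "\<dots> = (\<Prod>k\<in>K. emeasure lborel (A (g k)))"
    using A gI K by (subst LLps.emeasure_PiM) auto
  also have "\<dots> = (\<Prod>i\<in>I. emeasure lborel (A i))"
    using f gf by (subst prod.reindex_bij_betw[OF f, symmetric]) (auto intro!: prod.cong)
  finally show "emeasure (distr (LL K) (LL I) (\<lambda>\<omega>. restrict (\<lambda>i. \<omega> (f i)) I)) (Pi\<^sub>E I A) = (\<Prod>i\<in>I. emeasure lborel (A i))" .
qed

lemma row_off_Suc: "row_off n (Suc i) = row_off n i + n i"
  by (simp add: row_off_def)

lemma row_off_mono: "i < i' \<Longrightarrow> row_off n i + n i \<le> row_off n i'"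
proof (induction i' arbitrary: i)
  case 0 then show ?case by simp
next
  case (Suc i')
  show ?case
  proof (cases "i = i'")
    case True then show ?thesis by (simp add: row_off_Suc)
  next
    case False
    then have "i < i'" using Suc.prems by simp
    then have "row_off n i + n i \<le> row_off n i'" by (rule Suc.IH)
    then show ?thesis by (simp add: row_off_Suc)
  qed
qed

lemma ix_Sigma: "ix n m K = Sigma K (\<lambda>i. {..<n i} \<times> {..<m})"
  by (auto simp: ix_def)

lemma card_ix: "finite K \<Longrightarrow> card (ix n m K) = (\<Sum>i\<in>K. n i * m)"
  unfolding ix_Sigma by (simp add: card_SigmaI card_cartesian_product)

definition phi :: "(nat \<Rightarrow> nat) \<Rightarrow> nat \<times> nat \<times> nat \<Rightarrow> nat \<times> nat" where
  "phi n j = (case j of (i, r, c) \<Rightarrow> (row_off n i + r, c))"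

lemma phi_bij:
  "bij_betw (phi n) (ix n m {..k}) (mat_idx (\<Sum>i\<le>k. n i) m)"
proof -
  have inj: "inj_on (phi n) (ix n m {..k})"
  proof (rule inj_onI)
    fix x y assume x: "x \<in> ix n m {..k}" and y: "y \<in> ix n m {..k}" and e: "phi n x = phi n y"
    obtain i r c where xx: "x = (i, r, c)" "r < n i" using x by (auto simp: ix_def)
    obtain i' r' c' where yy: "y = (i', r', c')" "r' < n i'" using y by (auto simp: ix_def)
    have e1: "row_off n i + r = row_off n i' + r'" and e2: "c = c'" using e xx yy by (auto simp: phi_def)
    have "i = i'"
    proof (rule ccontr)
      assume "i \<noteq> i'"
      then have "i < i' \<or> i' < i" by auto
      then show False
        using row_off_mono[of i i' n] row_off_mono[of i' i n] e1 xx yy by auto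
    qed
    then show "x = y" using e1 e2 xx yy by simp
  qed
  have sub: "phi n ` ix n m {..k} \<subseteq> mat_idx (\<Sum>i\<le>k. n i) m"
  proof
    fix p assume "p \<in> phi n ` ix n m {..k}"
    then obtain i r c where p: "p = (row_off n i + r, c)" "i \<le> k" "r < n i" "c < m"
      by (auto simp: ix_def phi_def)
    have "row_off n i + n i \<le> row_off n (Suc k)"
    proof (cases "i = k")
      case True then show ?thesis by (simp add: row_off_Suc)
    next
      case False
      then have "i < k" using p by simp
      from row_off_mono[OF this, of n] show ?thesis by (simp add: row_off_Suc)
    qed
    moreover have "row_off n (Suc k) = (\<Sum>i\<le>k. n i)" by (simp add: row_off_def lessThan_Suc_atMost)
    ultimately show "p \<in> mat_idx (\<Sum>i\<le>k. n i) m" using p by (auto simp: mat_idx_def)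
  qed
  have "card (phi n ` ix n m {..k}) = card (mat_idx (\<Sum>i\<le>k. n i) m)"
    using inj by (simp add: card_image card_ix mat_idx_def card_cartesian_product sum_distrib_right)
  then have "phi n ` ix n m {..k} = mat_idx (\<Sum>i\<le>k. n i) m"
    using sub by (intro card_subset_eq) (auto simp: mat_idx_def)
  then show ?thesis using inj by (simp add: bij_betw_def)
qed

definition rmap :: "(nat \<Rightarrow> nat) \<Rightarrow> nat \<Rightarrow> nat \<Rightarrow> ((nat \<times> nat) \<Rightarrow> real) \<Rightarrow> ((nat \<times> nat \<times> nat) \<Rightarrow> real)" where
  "rmap n m k X = restrict (\<lambda>j. X (phi n j)) (ix n m {..k})"

definition RT :: "(nat \<Rightarrow> nat) \<Rightarrow> nat \<Rightarrow> nat \<Rightarrow> ((nat \<times> nat \<times> nat) \<Rightarrow> real) \<Rightarrow> ((nat \<times> nat \<times> nat) \<Rightarrow> real)" where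
  "RT n m k z = restrict (\<lambda>(i, r, c). z (i, r, c) / sqrt (R_sq n m z 0 + R_sq n m z i)) (ix n m {1..k})"

lemma R_sq_rmap: "i \<le> k \<Longrightarrow> R_sq n m (rmap n m k X) i = blk_sq n m i X"
  unfolding R_sq_def blk_sq_def rmap_def by (intro sum.cong refl) (auto simp: ix_def phi_def)

lemma V_rmap: "V_stat n m X = R_sq n m (rmap n m k X) 0"
  by (simp add: V_stat_def R_sq_rmap)

lemma R_idx_ix: "R_idx k n m = ix n m {1..k}"
  by (simp add: R_idx_def ix_def)

lemma R_stat_rmap: "R_stat k n m X = RT n m k (rmap n m k X)"
proof
  fix j :: "nat \<times> nat \<times> nat"
  obtain i r c where j: "j = (i, r, c)" by (cases j) auto
  show "R_stat k n m X j = RT n m k (rmap n m k X) j"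
  proof (cases "j \<in> ix n m {1..k}")
    case True
    then have i: "1 \<le> i" "i \<le> k" "r < n i" "c < m" using j by (auto simp: ix_def)
    have e1: "rmap n m k X (i, r, c) = X (row_off n i + r, c)"
      using i by (simp add: rmap_def ix_def phi_def)
    have e2: "R_sq n m (rmap n m k X) i = blk_sq n m i X" using i by (simp add: R_sq_rmap)
    have e3: "R_sq n m (rmap n m k X) 0 = V_stat n m X" by (simp add: V_rmap[of n m X k])
    have "R_stat k n m X j = X (row_off n i + r, c) / sqrt (V_stat n m X + blk_sq n m i X)"
      using True by (simp add: R_stat_def R_idx_ix j)
    also have "\<dots> = RT n m k (rmap n m k X) j"
      using True by (simp add: RT_def j e1 e2 e3)
    finally show ?thesis .
  next
    case False
    then show ?thesis by (simp add: R_stat_def R_idx_ix RT_def)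
  qed
qed

lemma frob_rmap:
  assumes N: "N = (\<Sum>i\<le>k. n i)"
  shows "frob_sq N m X = (\<Sum>i\<le>k. R_sq n m (rmap n m k X) i)"
proof -
  have "frob_sq N m X = (\<Sum>j\<in>ix n m {..k}. (X (phi n j))\<^sup>2)"
    unfolding frob_sq_def N using sum.reindex_bij_betw[OF phi_bij[of n m k], of "\<lambda>p. (X p)\<^sup>2"] by simp
  also have "\<dots> = (\<Sum>i\<le>k. \<Sum>rc\<in>{..<n i} \<times> {..<m}. (X (phi n (i, rc)))\<^sup>2)"
    unfolding ix_Sigma by (subst sum.Sigma) auto
  also have "\<dots> = (\<Sum>i\<le>k. R_sq n m (rmap n m k X) i)"
  proof (rule sum.cong[OF refl])
    fix i assume i: "i \<in> {..k}"
    have "(\<Sum>rc\<in>{..<n i} \<times> {..<m}. (X (phi n (i, rc)))\<^sup>2) = (\<Sum>r<n i. \<Sum>c<m. (X (phi n (i, r, c)))\<^sup>2)"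
      by (simp add: sum.cartesian_product)
    also have "\<dots> = R_sq n m (rmap n m k X) i"
      unfolding R_sq_def rmap_def using i by (intro sum.cong refl) (auto simp: ix_def)
    finally show "(\<Sum>rc\<in>{..<n i} \<times> {..<m}. (X (phi n (i, rc)))\<^sup>2) = R_sq n m (rmap n m k X) i" .
  qed
  finally show ?thesis .
qed

lemma rmap_measurable[measurable]:
  "rmap n m k \<in> measurable (mat_lebesgue (\<Sum>i\<le>k. n i) m) (LL (ix n m {..k}))"
  unfolding rmap_def mat_lebesgue_def
  by (rule measurable_restrict) (use bij_betwE[OF phi_bij[of n m k]] in auto)

lemma distr_rmap:
  "distr (mat_lebesgue (\<Sum>i\<le>k. n i) m) (LL (ix n m {..k})) (rmap n m k) = LL (ix n m {..k})"
  unfolding rmap_def mat_lebesgue_def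
  by (rule reindex_LL[OF finite_ix phi_bij]) simp

lemma ix_split: "ix n m {..k} = ix n m {0} \<union> ix n m {1..k}"
  by (auto simp: ix_def)

lemma ix_split_disj: "ix n m {0} \<inter> ix n m {1..k} = {}"
  by (auto simp: ix_def)

lemma merge_R_sq0: "R_sq n m (merge (ix n m {0}) (ix n m {1..k}) (x, z)) 0 = sqn (ix n m {0}) x"
  using merge_R_sq1[of "{0}" "{1..k}" 0 n m x z] by (simp add: sqn_ix1)

lemma merge_R_sqi: "i \<in> {1..k} \<Longrightarrow> R_sq n m (merge (ix n m {0}) (ix n m {1..k}) (x, z)) i = R_sq n m z i"
  using merge_R_sq2[of "{0}" "{1..k}" i n m x z] by simp

lemma merge_RT: "RT n m k (merge (ix n m {0}) (ix n m {1..k}) (x, z)) = TT n m (sqn (ix n m {0}) x) {1..k} z"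
proof
  fix j :: "nat \<times> nat \<times> nat"
  obtain i r c where j: "j = (i, r, c)" by (cases j) auto
  show "RT n m k (merge (ix n m {0}) (ix n m {1..k}) (x, z)) j = TT n m (sqn (ix n m {0}) x) {1..k} z j"
  proof (cases "j \<in> ix n m {1..k}")
    case True
    then have i: "i \<in> {1..k}" using j by (auto simp: ix_def)
    have e: "merge (ix n m {0}) (ix n m {1..k}) (x, z) (i, r, c) = z (i, r, c)"
      using True j i by (auto simp: merge_def ix_def)
    have e2: "R_sq n m (merge (ix n m {0}) (ix n m {1..k}) (x, z)) 0 = sqn (ix n m {0}) x" by (rule merge_R_sq0)
    have e3: "R_sq n m (merge (ix n m {0}) (ix n m {1..k}) (x, z)) i = R_sq n m z i" by (rule merge_R_sqi[OF i])
    show ?thesis using True e e2 e3 by (simp add: RT_def TT_def j)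
  next
    case False
    then show ?thesis by (simp add: RT_def TT_def)
  qed
qed

lemma merge_sum:
  "(\<Sum>i\<le>k. R_sq n m (merge (ix n m {0}) (ix n m {1..k}) (x, z)) i) = sqn (ix n m {0}) x + SS n m {1..k} z"
proof -
  have "{..k} = insert 0 {1..k}" by auto
  then have "(\<Sum>i\<le>k. R_sq n m (merge (ix n m {0}) (ix n m {1..k}) (x, z)) i)
      = R_sq n m (merge (ix n m {0}) (ix n m {1..k}) (x, z)) 0 + (\<Sum>i\<in>{1..k}. R_sq n m (merge (ix n m {0}) (ix n m {1..k}) (x, z)) i)"
    by simp
  also have "\<dots> = sqn (ix n m {0}) x + SS n m {1..k} z"
  proof -
    have "(\<Sum>i\<in>{1..k}. R_sq n m (merge (ix n m {0}) (ix n m {1..k}) (x, z)) i) = (\<Sum>i\<in>{1..k}. R_sq n m z i)"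
      by (rule sum.cong[OF refl]) (rule merge_R_sqi)
    then show ?thesis by (simp only: merge_R_sq0 SS_def)
  qed
  finally show ?thesis .
qed

definition hp :: "(real \<Rightarrow> real) \<Rightarrow> real \<Rightarrow> real" where
  "hp h t = h (max t 0)"

definition dens :: "nat \<Rightarrow> (nat \<Rightarrow> nat) \<Rightarrow> nat \<Rightarrow> nat \<Rightarrow> (real \<Rightarrow> real) \<Rightarrow> real \<times> ((nat \<times> nat \<times> nat) \<Rightarrow> real) \<Rightarrow> real" where
  "dens N n m k h p = (case p of (v, R) \<Rightarrow>
     indicator {(v, R). v > 0 \<and> (\<forall>i\<in>{1..k}. R_sq n m R i < 1)} (v, R)
     * (cst (n 0 * m) * v powr (real (N * m) / 2 - 1) * hp h (v * (1 + QQ n m {1..k} R))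
        * (\<Prod>i\<in>{1..k}. (1 - R_sq n m R i) powr (- (real (n i * m) / 2) - 1))))"

lemma RT_measurable[measurable]: "RT n m k \<in> measurable (LL (ix n m {..k})) (LL (ix n m {1..k}))"
  unfolding RT_def
proof (rule measurable_restrict)
  fix j assume j: "j \<in> ix n m {1..k}"
  obtain i r c where jj: "j = (i, r, c)" by (cases j) auto
  have i: "i \<in> {..k}" "(i, r, c) \<in> ix n m {..k}" using j jj by (auto simp: ix_def)
  have m1: "(\<lambda>x. x (i, r, c)) \<in> borel_measurable (LL (ix n m {..k}))"
    using i by (intro measurable_PiM_component_rev) auto
  have m2: "(\<lambda>x. R_sq n m x i) \<in> borel_measurable (LL (ix n m {..k}))"
    using i by (intro R_sq_measurable) auto
  have m3: "(\<lambda>x. R_sq n m x 0) \<in> borel_measurable (LL (ix n m {..k}))"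
    by (intro R_sq_measurable) auto
  note [measurable] = m1 m2 m3
  have "(\<lambda>x. x (i, r, c) / sqrt (R_sq n m x 0 + R_sq n m x i)) \<in> borel_measurable (LL (ix n m {..k}))"
    by measurable
  then show "(\<lambda>x. case j of (i, r, c) \<Rightarrow> x (i, r, c) / sqrt (R_sq n m x 0 + R_sq n m x i)) \<in> measurable (LL (ix n m {..k})) lborel"
    using jj by simp
qed

lemma WW_joint[measurable]:
  assumes K: "finite K"
  shows "(\<lambda>p. WW n m (fst p) K (snd p)) \<in> borel_measurable (borel \<Otimes>\<^sub>M LL (ix n m K))"
  unfolding WW_def Jac_def
proof (intro borel_measurable_prod)
  fix i assume i: "i \<in> K"
  have [measurable]: "(\<lambda>p. R_sq n m (snd p) i) \<in> borel_measurable (borel \<Otimes>\<^sub>M LL (ix n m K))"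
    using measurable_compose[OF measurable_snd R_sq_measurable[OF K i]] .
  show "(\<lambda>p. indicator {..<1} (R_sq n m (snd p) i) *
      (fst p powr (real (n i * m) / 2) * (1 - R_sq n m (snd p) i) powr (- (real (n i * m) / 2) - 1)))
      \<in> borel_measurable (borel \<Otimes>\<^sub>M LL (ix n m K))"
    by measurable
qed

lemma sum_split0: "(\<Sum>i\<le>(k::nat). f i) = f 0 + (\<Sum>i\<in>{1..k}. f i)"
proof -
  have "{..k} = insert 0 {1..k}" by (auto simp: Suc_le_eq)
  then have "(\<Sum>i\<le>k. f i) = (\<Sum>i\<in>insert 0 {1..k}. f i)" by simp
  also have "\<dots> = f 0 + (\<Sum>i\<in>{1..k}. f i)" by (rule sum.insert) auto
  finally show ?thesis .
qed

lemma pointwise_dens: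
  fixes u :: real and z :: "(nat \<times> nat \<times> nat) \<Rightarrow> real"
  assumes N: "N = (\<Sum>i\<le>k. n i)" and Fn: "0 \<le> Fv" and hn: "\<forall>t. 0 \<le> hp h t"
  shows "indicator {0<..} u * cst (n 0 * m) * u powr (real (n 0 * m) / 2 - 1)
           * (WW n m u {1..k} z * (Fv * hp h (u + u * QQ n m {1..k} z)))
       = Fv * dens N n m k h (u, z)"
proof (cases "u > 0 \<and> (\<forall>i\<in>{1..k}. R_sq n m z i < 1)")
  case False
  then consider "\<not> u > 0" | i where "i \<in> {1..k}" "\<not> R_sq n m z i < 1" by auto
  then show ?thesis
  proof cases
    case 1 then show ?thesis by (simp add: dens_def indicator_def)
  next
    case 2
    then have "WW n m u {1..k} z = 0"
      unfolding WW_def by (intro prod_zero) (auto intro!: bexI[of _ i] simp: indicator_def)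
    then show ?thesis using 2 by (auto simp: dens_def indicator_def)
  qed
next
  case True
  then have u: "u > 0" and r: "\<forall>i\<in>{1..k}. R_sq n m z i < 1" by auto
  have WW: "WW n m u {1..k} z = u powr (\<Sum>i\<in>{1..k}. real (n i * m) / 2)
      * (\<Prod>i\<in>{1..k}. (1 - R_sq n m z i) powr (- (real (n i * m) / 2) - 1))"
  proof -
    have "WW n m u {1..k} z = (\<Prod>i\<in>{1..k}. u powr (real (n i * m) / 2) * (1 - R_sq n m z i) powr (- (real (n i * m) / 2) - 1))"
      unfolding WW_def Jac_def using r by (intro prod.cong) (auto simp: indicator_def)
    also have "\<dots> = (\<Prod>i\<in>{1..k}. u powr (real (n i * m) / 2)) * (\<Prod>i\<in>{1..k}. (1 - R_sq n m z i) powr (- (real (n i * m) / 2) - 1))"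
      by (rule prod.distrib)
    also have "(\<Prod>i\<in>{1..k}. u powr (real (n i * m) / 2)) = u powr (\<Sum>i\<in>{1..k}. real (n i * m) / 2)"
      using u by (simp add: powr_sum)
    finally show ?thesis .
  qed
  have ex: "real (n 0 * m) / 2 - 1 + (\<Sum>i\<in>{1..k}. real (n i * m) / 2) = real (N * m) / 2 - 1"
  proof -
    have "real (N * m) = (\<Sum>i\<le>k. real (n i * m))" unfolding N by (simp add: sum_distrib_right)
    also have "\<dots> = real (n 0 * m) + (\<Sum>i\<in>{1..k}. real (n i * m))" by (rule sum_split0)
    finally show ?thesis by (simp add: sum_divide_distrib[symmetric])
  qed
  have pw: "u powr (real (n 0 * m) / 2 - 1) * u powr (\<Sum>i\<in>{1..k}. real (n i * m) / 2) = u powr (real (N * m) / 2 - 1)"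
    by (subst powr_add[symmetric]) (simp only: ex)
  have hh: "hp h (u + u * QQ n m {1..k} z) = hp h (u * (1 + QQ n m {1..k} z))"
    by (simp add: algebra_simps)
  show ?thesis
    using True u pw unfolding dens_def WW hh
    by (simp add: indicator_def ac_simps)
qed

theorem goalI:
  fixes F :: "real \<times> ((nat \<times> nat \<times> nat) \<Rightarrow> real) \<Rightarrow> real"
  assumes m: "1 \<le> m" and n_ge: "\<forall>i\<le>k. m \<le> n i" and N: "N = (\<Sum>i\<le>k. n i)"
    and hm: "hp h \<in> borel_measurable borel" and hn: "\<forall>t. 0 \<le> hp h t"
    and Fm: "F \<in> borel_measurable (lborel \<Otimes>\<^sub>M LL (ix n m {1..k}))" and Fn: "\<forall>p. 0 \<le> F p"
  shows "(\<integral>\<^sup>+ X. ennreal (F (V_stat n m X, R_stat k n m X) * hp h (frob_sq N m X)) \<partial>mat_lebesgue N m)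
       = (\<integral>\<^sup>+ p. ennreal (F p * dens N n m k h p) \<partial>(lborel \<Otimes>\<^sub>M LL (ix n m {1..k})))"
proof -
  let ?IA = "ix n m {0}" and ?IB = "ix n m {1..k}" and ?I = "ix n m {..k}"
  have Fm': "F \<in> borel_measurable (borel \<Otimes>\<^sub>M LL ?IB)"
  proof -
    have e: "sets (lborel \<Otimes>\<^sub>M LL ?IB) = sets (borel \<Otimes>\<^sub>M LL ?IB)" by (rule sets_pair_measure_cong) auto
    show ?thesis using Fm measurable_cong_sets[OF e refl, of borel] by simp
  qed
  note [measurable] = Fm Fm' hm
  have fin1: "finite ?IB" by (rule finite_ix) simp
  have fin0: "finite ?IA" by (rule finite_ix) simp
  have n0: "1 \<le> n 0 * m" using m n_ge by (metis le_0_eq mult_le_mono1 mult_numeral_1 numeral_One order_trans zero_le)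
  have ne0: "?IA \<noteq> {}" using ix1_ne[of n 0 m, OF n0] .
  define g where "g z = ennreal (F (R_sq n m z 0, RT n m k z) * hp h (\<Sum>i\<le>k. R_sq n m z i))" for z
  have gm: "g \<in> borel_measurable (LL ?I)"
  proof -
    have [measurable]: "(\<lambda>z. R_sq n m z i) \<in> borel_measurable (LL ?I)" if "i \<le> k" for i
      using that by (intro R_sq_measurable) auto
    have [measurable]: "(\<lambda>z. R_sq n m z 0) \<in> borel_measurable (LL ?I)"
      by (intro R_sq_measurable) auto
    have "(\<lambda>z. (R_sq n m z 0, RT n m k z)) \<in> measurable (LL ?I) (lborel \<Otimes>\<^sub>M LL ?IB)" by measurable
    then have "(\<lambda>z. F (R_sq n m z 0, RT n m k z)) \<in> borel_measurable (LL ?I)"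
      using Fm by (rule measurable_compose)
    moreover have "(\<lambda>z. \<Sum>i\<le>k. R_sq n m z i) \<in> borel_measurable (LL ?I)"
      by (intro borel_measurable_sum) auto
    ultimately show ?thesis unfolding g_def by measurable
  qed
  have "(\<integral>\<^sup>+ X. ennreal (F (V_stat n m X, R_stat k n m X) * hp h (frob_sq N m X)) \<partial>mat_lebesgue N m)
      = (\<integral>\<^sup>+ X. g (rmap n m k X) \<partial>mat_lebesgue N m)"
    by (intro nn_integral_cong) (simp add: g_def V_rmap[of n m _ k] R_stat_rmap frob_rmap[OF N])
  also have "\<dots> = (\<integral>\<^sup>+ z. g z \<partial>distr (mat_lebesgue N m) (LL ?I) (rmap n m k))"
    using gm N by (subst nn_integral_distr) auto
  also have "\<dots> = (\<integral>\<^sup>+ z. g z \<partial>LL ?I)"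
    unfolding N by (simp add: distr_rmap)
  also have "\<dots> = (\<integral>\<^sup>+ x. \<integral>\<^sup>+ z. g (merge ?IA ?IB (x, z)) \<partial>LL ?IB \<partial>LL ?IA)"
  proof -
    have e: "?I = ?IA \<union> ?IB" by (rule ix_split)
    have d: "?IA \<inter> ?IB = {}" by (rule ix_split_disj)
    have gm': "g \<in> borel_measurable (LL (?IA \<union> ?IB))" using gm unfolding e .
    show ?thesis unfolding e by (rule LLps.product_nn_integral_fold[OF d fin0 fin1 gm'])
  qed
  also have "\<dots> = (\<integral>\<^sup>+ x. (\<lambda>u. \<integral>\<^sup>+ z. ennreal (WW n m u {1..k} z * (F (u, z) * hp h (u + u * QQ n m {1..k} z))) \<partial>LL ?IB) (sqn ?IA x) \<partial>LL ?IA)"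
  proof (rule nn_integral_cong_AE)
    show "AE x in LL ?IA. (\<integral>\<^sup>+ z. g (merge ?IA ?IB (x, z)) \<partial>LL ?IB)
        = (\<lambda>u. \<integral>\<^sup>+ z. ennreal (WW n m u {1..k} z * (F (u, z) * hp h (u + u * QQ n m {1..k} z))) \<partial>LL ?IB) (sqn ?IA x)"
      using AE_nonzero[OF fin0 ne0]
    proof (rule AE_mp, intro AE_I2 impI)
      fix x assume "sqn ?IA x \<noteq> 0"
      then have s: "sqn ?IA x > 0" using sqn_nonneg[of ?IA x] by linarith
      define s0 where "s0 = sqn ?IA x"
      have s0: "s0 > 0" using s by (simp add: s0_def)
      define G where "G R t = F (s0, R) * hp h (s0 + t)" for R t
      have Gm: "(\<lambda>p. G (fst p) (snd p)) \<in> borel_measurable (LL ?IB \<Otimes>\<^sub>M borel)"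
      proof -
        have "(\<lambda>p. (s0, fst p)) \<in> measurable (LL ?IB \<Otimes>\<^sub>M borel) (lborel \<Otimes>\<^sub>M LL ?IB)" by measurable
        then have "(\<lambda>p. F (s0, fst p)) \<in> borel_measurable (LL ?IB \<Otimes>\<^sub>M borel)"
          using Fm by (rule measurable_compose)
        then show ?thesis unfolding G_def by measurable
      qed
      have Gn: "\<forall>R t. 0 \<le> G R t" unfolding G_def using Fn hn by (auto intro: mult_nonneg_nonneg)
      have MB: "MB n m s0 {1..k}"
        using n_ge m s0 by (intro MB_all) (auto intro: order_trans[OF m] mult_le_mono1 simp: Suc_le_eq)
      have "(\<integral>\<^sup>+ z. g (merge ?IA ?IB (x, z)) \<partial>LL ?IB) = (\<integral>\<^sup>+ z. ennreal (G (TT n m s0 {1..k} z) (SS n m {1..k} z)) \<partial>LL ?IB)"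
        unfolding g_def G_def s0_def merge_R_sq0 merge_RT merge_sum ..
      also have "\<dots> = (\<integral>\<^sup>+ z. ennreal (WW n m s0 {1..k} z * G z (s0 * QQ n m {1..k} z)) \<partial>LL ?IB)"
        by (rule MB[unfolded MB_def, rule_format, OF Gm]) (use Gn in auto)
      finally show "(\<integral>\<^sup>+ z. g (merge ?IA ?IB (x, z)) \<partial>LL ?IB)
        = (\<lambda>u. \<integral>\<^sup>+ z. ennreal (WW n m u {1..k} z * (F (u, z) * hp h (u + u * QQ n m {1..k} z))) \<partial>LL ?IB) (sqn ?IA x)"
        by (simp add: G_def s0_def)
    qed
  qed
  also have "\<dots> = (\<integral>\<^sup>+ u. ennreal (indicator {0<..} u * cst (card ?IA) * u powr (real (card ?IA) / 2 - 1))
       * (\<integral>\<^sup>+ z. ennreal (WW n m u {1..k} z * (F (u, z) * hp h (u + u * QQ n m {1..k} z))) \<partial>LL ?IB) \<partial>lborel)"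
  proof (rule radial[OF fin0 ne0])
    interpret s1: sigma_finite_measure "LL ?IB" using fin1 by (rule LLps.sigma_finite)
    show "(\<lambda>u. \<integral>\<^sup>+ z. ennreal (WW n m u {1..k} z * (F (u, z) * hp h (u + u * QQ n m {1..k} z))) \<partial>LL ?IB) \<in> borel_measurable borel"
    proof -
      have [measurable]: "(\<lambda>p. QQ n m {1..k} (snd p)) \<in> borel_measurable (borel \<Otimes>\<^sub>M LL ?IB)"
        using measurable_compose[OF measurable_snd QQ_measurable[OF finite_atLeastAtMost]] .
      have [measurable]: "(\<lambda>p. WW n m (fst p) {1..k} (snd p)) \<in> borel_measurable (borel \<Otimes>\<^sub>M LL ?IB)"
        by (rule WW_joint) simp
      have "(\<lambda>p. ennreal (WW n m (fst p) {1..k} (snd p) * (F p * hp h (fst p + fst p * QQ n m {1..k} (snd p)))))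
          \<in> borel_measurable (borel \<Otimes>\<^sub>M LL ?IB)" by measurable
      from s1.borel_measurable_nn_integral_fst[OF this] show ?thesis by simp
    qed
  qed
  also have "\<dots> = (\<integral>\<^sup>+ u. \<integral>\<^sup>+ z. ennreal (F (u, z) * dens N n m k h (u, z)) \<partial>LL ?IB \<partial>lborel)"
  proof (rule nn_integral_cong)
    fix u :: real
    have "ennreal (indicator {0<..} u * cst (card ?IA) * u powr (real (card ?IA) / 2 - 1))
       * (\<integral>\<^sup>+ z. ennreal (WW n m u {1..k} z * (F (u, z) * hp h (u + u * QQ n m {1..k} z))) \<partial>LL ?IB)
       = (\<integral>\<^sup>+ z. ennreal (indicator {0<..} u * cst (card ?IA) * u powr (real (card ?IA) / 2 - 1))
           * ennreal (WW n m u {1..k} z * (F (u, z) * hp h (u + u * QQ n m {1..k} z))) \<partial>LL ?IB)"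
      by (rule nn_integral_cmult[symmetric]) (use fin1 in measurable)
    also have "\<dots> = (\<integral>\<^sup>+ z. ennreal (F (u, z) * dens N n m k h (u, z)) \<partial>LL ?IB)"
    proof (rule nn_integral_cong)
      fix z
      have "0 < Gamma (real (n 0 * m) / 2)" using n0 by (intro Gamma_real_pos) auto
      then have c0: "0 \<le> cst (n 0 * m)" unfolding cst_def by (intro divide_nonneg_pos) auto
      have a_nn: "0 \<le> indicator {0<..} u * cst (n 0 * m) * u powr (real (n 0 * m) / 2 - 1)"
        using c0 by (simp add: indicator_def)
      have b_nn: "0 \<le> WW n m u {1..k} z * (F (u, z) * hp h (u + u * QQ n m {1..k} z))"
        using Fn hn WW_nonneg by (intro mult_nonneg_nonneg) auto
      have pd: "indicator {0<..} u * cst (n 0 * m) * u powr (real (n 0 * m) / 2 - 1)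
           * (WW n m u {1..k} z * (F (u, z) * hp h (u + u * QQ n m {1..k} z)))
          = F (u, z) * dens N n m k h (u, z)"
        by (rule pointwise_dens[OF N]) (use Fn hn in auto)
      have "ennreal (indicator {0<..} u * cst (n 0 * m) * u powr (real (n 0 * m) / 2 - 1))
           * ennreal (WW n m u {1..k} z * (F (u, z) * hp h (u + u * QQ n m {1..k} z)))
         = ennreal (indicator {0<..} u * cst (n 0 * m) * u powr (real (n 0 * m) / 2 - 1)
           * (WW n m u {1..k} z * (F (u, z) * hp h (u + u * QQ n m {1..k} z))))"
        by (rule ennreal_mult[OF a_nn b_nn, symmetric])
      also have "\<dots> = ennreal (F (u, z) * dens N n m k h (u, z))"
        by (simp only: pd)
      finally show "ennreal (indicator {0<..} u * cst (card ?IA) * u powr (real (card ?IA) / 2 - 1))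
           * ennreal (WW n m u {1..k} z * (F (u, z) * hp h (u + u * QQ n m {1..k} z)))
         = ennreal (F (u, z) * dens N n m k h (u, z))"
        unfolding card_ix1 .
    qed
    finally show "ennreal (indicator {0<..} u * cst (card ?IA) * u powr (real (card ?IA) / 2 - 1))
       * (\<integral>\<^sup>+ z. ennreal (WW n m u {1..k} z * (F (u, z) * hp h (u + u * QQ n m {1..k} z))) \<partial>LL ?IB)
       = (\<integral>\<^sup>+ z. ennreal (F (u, z) * dens N n m k h (u, z)) \<partial>LL ?IB)" .
  qed
  also have "\<dots> = (\<integral>\<^sup>+ p. ennreal (F p * dens N n m k h p) \<partial>(lborel \<Otimes>\<^sub>M LL ?IB))"
  proof -
    interpret s1: sigma_finite_measure "LL ?IB" using fin1 by (rule LLps.sigma_finite)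
    have dm: "(\<lambda>p. dens N n m k h p) \<in> borel_measurable (lborel \<Otimes>\<^sub>M LL ?IB)"
    proof -
      have Rm: "(\<lambda>p. R_sq n m (snd p) i) \<in> borel_measurable (lborel \<Otimes>\<^sub>M LL ?IB)" if "i \<in> {1..k}" for i
        by (rule measurable_compose[OF measurable_snd R_sq_measurable]) (use that in auto)
      have Qm[measurable]: "(\<lambda>p. QQ n m {1..k} (snd p)) \<in> borel_measurable (lborel \<Otimes>\<^sub>M LL ?IB)"
        by (rule measurable_compose[OF measurable_snd QQ_measurable]) auto
      have P1[measurable]: "(\<lambda>p. \<Prod>i\<in>{1..k}. indicator {..<1} (R_sq n m (snd p) i) :: real) \<in> borel_measurable (lborel \<Otimes>\<^sub>M LL ?IB)"
      proof (intro borel_measurable_prod)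
        fix i assume i: "i \<in> {1..k}"
        note [measurable] = Rm[OF i]
        show "(\<lambda>p. indicator {..<1} (R_sq n m (snd p) i) :: real) \<in> borel_measurable (lborel \<Otimes>\<^sub>M LL ?IB)" by measurable
      qed
      have P2[measurable]: "(\<lambda>p. \<Prod>i\<in>{1..k}. (1 - R_sq n m (snd p) i) powr (- (real (n i * m) / 2) - 1)) \<in> borel_measurable (lborel \<Otimes>\<^sub>M LL ?IB)"
      proof (intro borel_measurable_prod)
        fix i assume i: "i \<in> {1..k}"
        note [measurable] = Rm[OF i]
        show "(\<lambda>p. (1 - R_sq n m (snd p) i) powr (- (real (n i * m) / 2) - 1)) \<in> borel_measurable (lborel \<Otimes>\<^sub>M LL ?IB)" by measurable
      qed
      have ind: "(\<Prod>i\<in>{1..k}. indicator {..<1} (R_sq n m R i) :: real) = (if \<forall>i\<in>{1..k}. R_sq n m R i < 1 then 1 else 0)" for R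
      proof (cases "\<forall>i\<in>{1..k}. R_sq n m R i < 1")
        case True then show ?thesis by (simp add: indicator_def)
      next
        case False
        then obtain i where "i \<in> {1..k}" "\<not> R_sq n m R i < 1" by auto
        then show ?thesis using False by (intro trans[OF prod_zero]) (auto intro!: bexI[of _ i] simp: indicator_def)
      qed
      have eq: "dens N n m k h p = indicator {0<..} (fst p) * (\<Prod>i\<in>{1..k}. indicator {..<1} (R_sq n m (snd p) i))
          * (cst (n 0 * m) * fst p powr (real (N * m) / 2 - 1) * hp h (fst p * (1 + QQ n m {1..k} (snd p)))
             * (\<Prod>i\<in>{1..k}. (1 - R_sq n m (snd p) i) powr (- (real (n i * m) / 2) - 1)))" for p
        by (cases p) (simp add: dens_def ind indicator_def)
      show ?thesis unfolding eq by measurable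
    qed
    note [measurable] = dm
    have "(\<lambda>p. ennreal (F p * dens N n m k h p)) \<in> borel_measurable (lborel \<Otimes>\<^sub>M LL ?IB)"
      by measurable
    then show ?thesis by (rule s1.nn_integral_fst)
  qed
  finally show ?thesis .
qed

lemma hp_measurable:
  assumes "h \<in> borel_measurable (restrict_space borel {0..})"
  shows "hp h \<in> borel_measurable borel"
proof -
  have "(\<lambda>t::real. max t 0) \<in> measurable borel (restrict_space borel {0..})"
    by (rule measurable_restrict_space2) auto
  from measurable_comp[OF this assms] show ?thesis by (simp add: hp_def[abs_def] o_def)
qed

lemma R_sq_nonneg: "0 \<le> R_sq n m R i"
  unfolding R_sq_def by (intro sum_nonneg) auto

lemma dens_eq:
  "ennreal (indicator {(v, R). v > 0 \<and> (\<forall>i\<in>{1..k}. R_sq n m R i < 1)} (v, R)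
              * (pi powr (real (n 0 * m) / 2) / Gamma (real (n 0 * m) / 2)
                 * v powr (real (N * m) / 2 - 1)
                 * h (v * (1 + (\<Sum>i=1..k. R_sq n m R i / (1 - R_sq n m R i))))
                 * (\<Prod>i=1..k. (1 - R_sq n m R i) powr (- (real (n i * m) / 2) - 1))))
   = ennreal (dens N n m k h (v, R))"
proof (cases "v > 0 \<and> (\<forall>i\<in>{1..k}. R_sq n m R i < 1)")
  case True
  then have "0 \<le> (\<Sum>i=1..k. R_sq n m R i / (1 - R_sq n m R i))"
    by (intro sum_nonneg) (auto intro!: divide_nonneg_pos simp: R_sq_nonneg)
  then have "0 \<le> v * (1 + (\<Sum>i=1..k. R_sq n m R i / (1 - R_sq n m R i)))" using True by simp
  then show ?thesis using True by (simp add: dens_def hp_def cst_def QQ_def max_def)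
next
  case False
  then show ?thesis by (simp add: dens_def)
qed

lemma mult_scaling:
  fixes g :: "real \<Rightarrow> real"
  assumes c: "c > 0" and g: "g \<in> borel_measurable borel"
  shows "(\<integral>\<^sup>+ v. ennreal (g (c * v)) \<partial>lborel) = ennreal (1 / c) * (\<integral>\<^sup>+ t. ennreal (g t) \<partial>lborel)"
proof -
  have "(\<integral>\<^sup>+ v. ennreal (g (c * v)) \<partial>lborel) = (\<integral>\<^sup>+ t. ennreal (g t) \<partial>distr lborel borel ((*) c))"
    using g by (subst nn_integral_distr) auto
  also have "\<dots> = (\<integral>\<^sup>+ t. ennreal (g t) \<partial>density lborel (\<lambda>_. ennreal (inverse c)))"
    using c by (simp add: lborel_distr_mult)
  also have "\<dots> = (\<integral>\<^sup>+ t. ennreal (inverse c) * ennreal (g t) \<partial>lborel)"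
    using g by (subst nn_integral_density) auto
  also have "\<dots> = ennreal (1 / c) * (\<integral>\<^sup>+ t. ennreal (g t) \<partial>lborel)"
    using g by (subst nn_integral_cmult) (auto simp: divide_inverse)
  finally show ?thesis .
qed

lemma dens_measurable:
  assumes hm: "hp h \<in> borel_measurable borel"
  shows "(\<lambda>p. dens N n m k h p) \<in> borel_measurable (lborel \<Otimes>\<^sub>M LL (ix n m {1..k}))"
proof -
  let ?IB = "ix n m {1..k}"
  note [measurable] = hm
  have Rm: "(\<lambda>p. R_sq n m (snd p) i) \<in> borel_measurable (lborel \<Otimes>\<^sub>M LL ?IB)" if "i \<in> {1..k}" for i
    by (rule measurable_compose[OF measurable_snd R_sq_measurable]) (use that in auto)
  have Qm[measurable]: "(\<lambda>p. QQ n m {1..k} (snd p)) \<in> borel_measurable (lborel \<Otimes>\<^sub>M LL ?IB)"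
    by (rule measurable_compose[OF measurable_snd QQ_measurable]) auto
  have P1[measurable]: "(\<lambda>p. \<Prod>i\<in>{1..k}. indicator {..<1} (R_sq n m (snd p) i) :: real) \<in> borel_measurable (lborel \<Otimes>\<^sub>M LL ?IB)"
  proof (intro borel_measurable_prod)
    fix i assume i: "i \<in> {1..k}"
    note [measurable] = Rm[OF i]
    show "(\<lambda>p. indicator {..<1} (R_sq n m (snd p) i) :: real) \<in> borel_measurable (lborel \<Otimes>\<^sub>M LL ?IB)" by measurable
  qed
  have P2[measurable]: "(\<lambda>p. \<Prod>i\<in>{1..k}. (1 - R_sq n m (snd p) i) powr (- (real (n i * m) / 2) - 1)) \<in> borel_measurable (lborel \<Otimes>\<^sub>M LL ?IB)"
  proof (intro borel_measurable_prod)
    fix i assume i: "i \<in> {1..k}"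
    note [measurable] = Rm[OF i]
    show "(\<lambda>p. (1 - R_sq n m (snd p) i) powr (- (real (n i * m) / 2) - 1)) \<in> borel_measurable (lborel \<Otimes>\<^sub>M LL ?IB)" by measurable
  qed
  have ind: "(\<Prod>i\<in>{1..k}. indicator {..<1} (R_sq n m R i) :: real) = (if \<forall>i\<in>{1..k}. R_sq n m R i < 1 then 1 else 0)" for R
  proof (cases "\<forall>i\<in>{1..k}. R_sq n m R i < 1")
    case True then show ?thesis by (simp add: indicator_def)
  next
    case False
    then obtain i where "i \<in> {1..k}" "\<not> R_sq n m R i < 1" by auto
    then show ?thesis using False by (intro trans[OF prod_zero]) (auto intro!: bexI[of _ i] simp: indicator_def)
  qed
  have eq: "dens N n m k h p = indicator {0<..} (fst p) * (\<Prod>i\<in>{1..k}. indicator {..<1} (R_sq n m (snd p) i))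
      * (cst (n 0 * m) * fst p powr (real (N * m) / 2 - 1) * hp h (fst p * (1 + QQ n m {1..k} (snd p)))
         * (\<Prod>i\<in>{1..k}. (1 - R_sq n m (snd p) i) powr (- (real (n i * m) / 2) - 1)))" for p
    by (cases p) (simp add: dens_def ind indicator_def)
  show ?thesis unfolding eq by measurable
qed

lemma frob_nonneg: "0 \<le> frob_sq N m X"
  unfolding frob_sq_def by (intro sum_nonneg) auto

lemma stats_measurable:
  assumes N: "N = (\<Sum>i\<le>k. n i)"
  shows "(\<lambda>X. (V_stat n m X, R_stat k n m X)) \<in> measurable (mat_lebesgue N m) (lborel \<Otimes>\<^sub>M LL (ix n m {1..k}))"
proof -
  have [measurable]: "(\<lambda>z. R_sq n m z 0) \<in> borel_measurable (LL (ix n m {..k}))"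
    by (intro R_sq_measurable) auto
  have [measurable]: "rmap n m k \<in> measurable (mat_lebesgue N m) (LL (ix n m {..k}))"
    unfolding N by (rule rmap_measurable)
  have "(\<lambda>X. (R_sq n m (rmap n m k X) 0, RT n m k (rmap n m k X))) \<in> measurable (mat_lebesgue N m) (lborel \<Otimes>\<^sub>M LL (ix n m {1..k}))"
    by measurable
  then show ?thesis by (simp add: V_rmap[of n m _ k] R_stat_rmap)
qed

theorem part_a:
  assumes m_pos: "1 \<le> m"
    and n_ge: "\<forall>i\<le>k. m \<le> n i"
    and N_def: "N = (\<Sum>i\<le>k. n i)"
    and h_meas: "h \<in> borel_measurable (restrict_space borel {0..})"
    and h_nonneg: "\<forall>t\<ge>0. 0 \<le> h t"
  shows
    "distr (spherical_dist N m h) (lborel \<Otimes>\<^sub>M R_lebesgue k n m) (\<lambda>X. (V_stat n m X, R_stat k n m X))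
       = density (lborel \<Otimes>\<^sub>M R_lebesgue k n m) (\<lambda>p. ennreal (dens N n m k h p))"
proof -
  have Rl: "R_lebesgue k n m = LL (ix n m {1..k})" by (simp add: R_lebesgue_def R_idx_ix)
  have hm: "hp h \<in> borel_measurable borel" by (rule hp_measurable[OF h_meas])
  have hn: "\<forall>t. 0 \<le> hp h t" using h_nonneg by (simp add: hp_def)
  have sph: "spherical_dist N m h = density (mat_lebesgue N m) (\<lambda>X. ennreal (hp h (frob_sq N m X)))"
  proof -
    have "(\<lambda>X. ennreal (h (frob_sq N m X))) = (\<lambda>X. ennreal (hp h (frob_sq N m X)))"
      by (rule ext) (simp add: hp_def frob_nonneg max_absorb1)
    then show ?thesis unfolding spherical_dist_def by simp
  qed
  have fm: "(\<lambda>X. (V_stat n m X, R_stat k n m X)) \<in> measurable (mat_lebesgue N m) (lborel \<Otimes>\<^sub>M LL (ix n m {1..k}))"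
    by (rule stats_measurable[OF N_def])
  have frm: "(\<lambda>X. ennreal (hp h (frob_sq N m X))) \<in> borel_measurable (mat_lebesgue N m)"
  proof -
    have "frob_sq N m \<in> borel_measurable (mat_lebesgue N m)"
      unfolding frob_sq_def mat_lebesgue_def by measurable
    then show ?thesis using hm by measurable
  qed
  note dm = dens_measurable[OF hm, of N n m k]
  show ?thesis
    unfolding Rl sph
  proof (rule measure_eqI)
    show "sets (distr (density (mat_lebesgue N m) (\<lambda>X. ennreal (hp h (frob_sq N m X)))) (lborel \<Otimes>\<^sub>M LL (ix n m {1..k})) (\<lambda>X. (V_stat n m X, R_stat k n m X)))
        = sets (density (lborel \<Otimes>\<^sub>M LL (ix n m {1..k})) (\<lambda>p. ennreal (dens N n m k h p)))" by simp
    fix A assume A: "A \<in> sets (distr (density (mat_lebesgue N m) (\<lambda>X. ennreal (hp h (frob_sq N m X)))) (lborel \<Otimes>\<^sub>M LL (ix n m {1..k})) (\<lambda>X. (V_stat n m X, R_stat k n m X)))"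
    then have A': "A \<in> sets (lborel \<Otimes>\<^sub>M LL (ix n m {1..k}))" by simp
    have Fm: "(indicator A :: _ \<Rightarrow> real) \<in> borel_measurable (lborel \<Otimes>\<^sub>M LL (ix n m {1..k}))"
      using A' by simp
    have "emeasure (distr (density (mat_lebesgue N m) (\<lambda>X. ennreal (hp h (frob_sq N m X)))) (lborel \<Otimes>\<^sub>M LL (ix n m {1..k})) (\<lambda>X. (V_stat n m X, R_stat k n m X))) A
        = emeasure (density (mat_lebesgue N m) (\<lambda>X. ennreal (hp h (frob_sq N m X)))) ((\<lambda>X. (V_stat n m X, R_stat k n m X)) -` A \<inter> space (mat_lebesgue N m))"
      using A' fm by (subst emeasure_distr) auto
    also have "\<dots> = (\<integral>\<^sup>+ X. ennreal (hp h (frob_sq N m X)) * indicator ((\<lambda>X. (V_stat n m X, R_stat k n m X)) -` A \<inter> space (mat_lebesgue N m)) X \<partial>mat_lebesgue N m)"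
      using A' fm frm by (subst emeasure_density) (auto intro!: measurable_sets)
    also have "\<dots> = (\<integral>\<^sup>+ X. ennreal (indicator A (V_stat n m X, R_stat k n m X) * hp h (frob_sq N m X)) \<partial>mat_lebesgue N m)"
      by (intro nn_integral_cong) (auto simp: indicator_def)
    also have "\<dots> = (\<integral>\<^sup>+ p. ennreal (indicator A p * dens N n m k h p) \<partial>(lborel \<Otimes>\<^sub>M LL (ix n m {1..k})))"
      by (rule goalI[OF m_pos n_ge N_def hm hn Fm]) auto
    also have "\<dots> = emeasure (density (lborel \<Otimes>\<^sub>M LL (ix n m {1..k})) (\<lambda>p. ennreal (dens N n m k h p))) A"
      using A' dm by (subst emeasure_density) (auto intro!: nn_integral_cong simp: indicator_def)
    finally show "emeasure (distr (density (mat_lebesgue N m) (\<lambda>X. ennreal (hp h (frob_sq N m X)))) (lborel \<Otimes>\<^sub>M LL (ix n m {1..k})) (\<lambda>X. (V_stat n m X, R_stat k n m X))) A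
        = emeasure (density (lborel \<Otimes>\<^sub>M LL (ix n m {1..k})) (\<lambda>p. ennreal (dens N n m k h p))) A" .
  qed
qed

lemma Znorm:
  fixes k :: nat and n :: "nat \<Rightarrow> nat"
  assumes m_pos: "1 \<le> m" and n_ge: "\<forall>i\<le>k. m \<le> n i" and N_def: "N = (\<Sum>i\<le>k. n i)"
    and hm: "hp h \<in> borel_measurable borel" and hn: "\<forall>t. 0 \<le> hp h t"
    and h_norm: "(\<integral>\<^sup>+ X. ennreal (h (frob_sq N m X)) \<partial>mat_lebesgue N m) = 1"
  shows "(\<integral>\<^sup>+ t. ennreal (indicator {0<..} t * t powr (real (N * m) / 2 - 1) * hp h t) \<partial>lborel) = ennreal (1 / cst (N * m))"
proof -
  let ?M = "mat_idx N m"
  have n0: "m \<le> n 0" using n_ge by auto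
  have NN: "n 0 \<le> N" unfolding N_def by (rule member_le_sum) auto
  have fin: "finite ?M" by (simp add: mat_idx_def)
  have ne: "?M \<noteq> {}"
  proof -
    have "(0, 0) \<in> ?M" using m_pos n0 NN by (auto simp: mat_idx_def)
    then show ?thesis by auto
  qed
  have card: "card ?M = N * m" by (simp add: mat_idx_def card_cartesian_product)
  have Npos: "N * m \<ge> 1"
  proof -
    have "0 < N" "0 < m" using m_pos n0 NN by linarith+
    then have "0 < N * m" by simp
    then show ?thesis by simp
  qed
  have cpos: "cst (N * m) > 0" unfolding cst_def using Npos by (intro divide_pos_pos Gamma_real_pos) auto
  note [measurable] = hm
  define Z where "Z = (\<integral>\<^sup>+ t. ennreal (indicator {0<..} t * t powr (real (N * m) / 2 - 1) * hp h t) \<partial>lborel)"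
  have "1 = (\<integral>\<^sup>+ X. ennreal (hp h (sqn ?M X)) \<partial>LL ?M)"
    unfolding h_norm[symmetric] mat_lebesgue_def
    by (intro nn_integral_cong) (simp add: hp_def frob_sq_def sqn_def max_absorb1 sum_nonneg)
  also have "\<dots> = (\<integral>\<^sup>+ u. ennreal (indicator {0<..} u * cst (card ?M) * u powr (real (card ?M) / 2 - 1)) * ennreal (hp h u) \<partial>lborel)"
    by (rule radial[OF fin ne]) measurable
  also have "\<dots> = (\<integral>\<^sup>+ u. ennreal (cst (N * m)) * ennreal (indicator {0<..} u * u powr (real (N * m) / 2 - 1) * hp h u) \<partial>lborel)"
  proof (rule nn_integral_cong)
    fix u :: real
    define X where "X = indicator {0<..} u * cst (N * m) * u powr (real (N * m) / 2 - 1)"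
    define Y where "Y = indicator {0<..} u * u powr (real (N * m) / 2 - 1) * hp h u"
    have X: "0 \<le> X" unfolding X_def using cpos by (simp add: indicator_def)
    have Y: "0 \<le> Y" unfolding Y_def using hn by (simp add: indicator_def)
    have "ennreal X * ennreal (hp h u) = ennreal (X * hp h u)" using X hn by (simp add: ennreal_mult)
    also have "X * hp h u = cst (N * m) * Y" unfolding X_def Y_def by (simp only: ac_simps)
    also have "ennreal (cst (N * m) * Y) = ennreal (cst (N * m)) * ennreal Y" using cpos Y by (simp add: ennreal_mult)
    finally show "ennreal (indicator {0<..} u * cst (card ?M) * u powr (real (card ?M) / 2 - 1)) * ennreal (hp h u)
        = ennreal (cst (N * m)) * ennreal (indicator {0<..} u * u powr (real (N * m) / 2 - 1) * hp h u)"
      unfolding card X_def Y_def .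
  qed
  also have "\<dots> = ennreal (cst (N * m)) * Z"
    unfolding Z_def by (rule nn_integral_cmult) measurable
  finally have eq: "1 = ennreal (cst (N * m)) * Z" .
  have "Z = ennreal (1 / cst (N * m)) * (ennreal (cst (N * m)) * Z)"
  proof -
    have "ennreal (1 / cst (N * m)) * ennreal (cst (N * m)) = 1"
      using cpos by (simp add: ennreal_mult[symmetric])
    then show ?thesis by (simp add: mult.assoc[symmetric])
  qed
  then show ?thesis using eq[symmetric] by (simp add: Z_def)
qed

definition Db :: "nat \<Rightarrow> (nat \<Rightarrow> nat) \<Rightarrow> nat \<Rightarrow> nat \<Rightarrow> ((nat \<times> nat \<times> nat) \<Rightarrow> real) \<Rightarrow> real" where
  "Db N n m k R = indicator {R. \<forall>i\<in>{1..k}. R_sq n m R i < 1} R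
              * (Gamma (real (N * m) / 2)
                   / (pi powr (real ((N - n 0) * m) / 2) * Gamma (real (n 0 * m) / 2))
                 * (1 + (\<Sum>i=1..k. R_sq n m R i / (1 - R_sq n m R i))) powr (- (real (N * m) / 2))
                 * (\<Prod>i=1..k. (1 - R_sq n m R i) powr (- (real (n i * m) / 2) - 1)))"

lemma marg:
  fixes k :: nat and n :: "nat \<Rightarrow> nat"
  assumes m_pos: "1 \<le> m" and n_ge: "\<forall>i\<le>k. m \<le> n i" and N_def: "N = (\<Sum>i\<le>k. n i)"
    and hm: "hp h \<in> borel_measurable borel" and hn: "\<forall>t. 0 \<le> hp h t"
    and h_norm: "(\<integral>\<^sup>+ X. ennreal (h (frob_sq N m X)) \<partial>mat_lebesgue N m) = 1"
  shows "(\<integral>\<^sup>+ v. ennreal (dens N n m k h (v, R)) \<partial>lborel) = ennreal (Db N n m k R)"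
proof (cases "\<forall>i\<in>{1..k}. R_sq n m R i < 1")
  case False
  then show ?thesis by (simp add: dens_def Db_def)
next
  case True
  note [measurable] = hm
  define a where "a = real (N * m) / 2"
  define c where "c = 1 + QQ n m {1..k} R"
  define P where "P = (\<Prod>i\<in>{1..k}. (1 - R_sq n m R i) powr (- (real (n i * m) / 2) - 1))"
  define c0 where "c0 = cst (n 0 * m)"
  define g where "g t = indicator {0<..} t * t powr (a - 1) * hp h t" for t :: real
  have n0: "m \<le> n 0" using n_ge by auto
  have NN: "n 0 \<le> N" unfolding N_def by (rule member_le_sum) auto
  have d0: "1 \<le> n 0 * m" using m_pos n0
    by (metis le_trans mult_le_mono1 nat_mult_1)
  have G0: "Gamma (real (n 0 * m) / 2) > 0" using d0 by (intro Gamma_real_pos) auto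
  have Npos: "1 \<le> N * m" using d0 NN by (metis le_trans mult_le_mono1)
  have GN: "Gamma a > 0" using Npos unfolding a_def by (intro Gamma_real_pos) auto
  have Q0: "0 \<le> QQ n m {1..k} R"
    unfolding QQ_def using True by (intro sum_nonneg) (auto intro!: divide_nonneg_pos simp: R_sq_nonneg)
  have c: "c \<ge> 1" "c > 0" using Q0 by (auto simp: c_def)
  have P: "0 \<le> P" unfolding P_def by (intro prod_nonneg) auto
  have c0: "c0 > 0" unfolding c0_def cst_def using G0 by simp
  define K where "K = c0 * P * c powr (1 - a)"
  have K: "0 \<le> K" unfolding K_def using c0 P by simp
  have gm: "g \<in> borel_measurable borel" unfolding g_def by measurable
  note [measurable] = gm
  have gn: "0 \<le> g t" for t unfolding g_def using hn by (simp add: indicator_def)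
  have pw: "dens N n m k h (v, R) = K * g (c * v)" for v
  proof (cases "v > 0")
    case False
    then have "\<not> c * v > 0" using c by (simp add: zero_less_mult_iff)
    then show ?thesis using False by (simp add: dens_def g_def)
  next
    case v: True
    have e1: "(c * v) powr (a - 1) = c powr (a - 1) * v powr (a - 1)" using c v by (simp add: powr_mult)
    have e2: "c powr (1 - a) * c powr (a - 1) = 1" using c by (simp add: powr_add[symmetric])
    have "K * g (c * v) = c0 * P * (c powr (1 - a) * c powr (a - 1)) * v powr (a - 1) * hp h (c * v)"
      using v c unfolding K_def g_def by (simp add: e1 ac_simps)
    also have "\<dots> = c0 * P * v powr (a - 1) * hp h (v * c)" by (simp add: e2 mult.commute)
    also have "\<dots> = dens N n m k h (v, R)"
      using v True by (simp add: dens_def c0_def P_def a_def c_def ac_simps)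
    finally show ?thesis by simp
  qed
  have Z: "(\<integral>\<^sup>+ t. ennreal (g t) \<partial>lborel) = ennreal (1 / cst (N * m))"
    unfolding g_def a_def by (rule Znorm[OF m_pos n_ge N_def hm hn h_norm])
  have "(\<integral>\<^sup>+ v. ennreal (dens N n m k h (v, R)) \<partial>lborel) = (\<integral>\<^sup>+ v. ennreal K * ennreal (g (c * v)) \<partial>lborel)"
    using K gn by (simp add: pw ennreal_mult)
  also have "\<dots> = ennreal K * (\<integral>\<^sup>+ v. ennreal (g (c * v)) \<partial>lborel)"
    by (intro nn_integral_cmult) measurable
  also have "\<dots> = ennreal K * (ennreal (1 / c) * ennreal (1 / cst (N * m)))"
    by (simp add: mult_scaling[OF c(2) gm] Z)
  also have "\<dots> = ennreal (K * (1 / c) * (1 / cst (N * m)))"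
  proof -
    have cN: "cst (N * m) > 0" unfolding cst_def a_def[symmetric] using GN by simp
    have A: "ennreal (1 / c) * ennreal (1 / cst (N * m)) = ennreal ((1 / c) * (1 / cst (N * m)))"
      by (rule ennreal_mult[symmetric]) (use c cN in auto)
    have B: "ennreal K * ennreal ((1 / c) * (1 / cst (N * m))) = ennreal (K * ((1 / c) * (1 / cst (N * m))))"
      by (rule ennreal_mult[symmetric]) (use K c cN in auto)
    show ?thesis by (simp only: A B mult.assoc)
  qed
  also have "K * (1 / c) * (1 / cst (N * m)) = Db N n m k R"
  proof -
    have e1: "pi powr a = pi powr (real ((N - n 0) * m) / 2) * pi powr (real (n 0 * m) / 2)"
    proof -
      have "real ((N - n 0) * m) / 2 + real (n 0 * m) / 2 = a"
        using NN unfolding a_def by (simp add: of_nat_diff left_diff_distrib field_simps)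
      then show ?thesis by (simp add: powr_add[symmetric])
    qed
    have e2: "c powr (1 - a) = c * c powr (- a)"
    proof -
      have "c powr (1 - a) = c powr 1 * c powr (- a)" by (subst powr_add[symmetric]) simp
      then show ?thesis using c by simp
    qed
    have Db: "Db N n m k R = Gamma a / (pi powr (real ((N - n 0) * m) / 2) * Gamma (real (n 0 * m) / 2)) * c powr (- a) * P"
      using True by (simp add: Db_def a_def c_def P_def QQ_def)
    show ?thesis
      unfolding Db K_def c0_def cst_def e2 e1 a_def[symmetric]
      using c G0 GN by (simp add: field_simps)
  qed
  finally show ?thesis .
qed

lemma Db_measurable:
  "(\<lambda>R. Db N n m k R) \<in> borel_measurable (LL (ix n m {1..k}))"
proof -
  let ?IB = "ix n m {1..k}"
  have Rm: "(\<lambda>R. R_sq n m R i) \<in> borel_measurable (LL ?IB)" if "i \<in> {1..k}" for i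
    by (rule R_sq_measurable) (use that in auto)
  have P1[measurable]: "(\<lambda>R. \<Prod>i\<in>{1..k}. indicator {..<1} (R_sq n m R i) :: real) \<in> borel_measurable (LL ?IB)"
  proof (intro borel_measurable_prod)
    fix i assume i: "i \<in> {1..k}"
    note [measurable] = Rm[OF i]
    show "(\<lambda>R. indicator {..<1} (R_sq n m R i) :: real) \<in> borel_measurable (LL ?IB)" by measurable
  qed
  have P2[measurable]: "(\<lambda>R. \<Prod>i\<in>{1..k}. (1 - R_sq n m R i) powr (- (real (n i * m) / 2) - 1)) \<in> borel_measurable (LL ?IB)"
  proof (intro borel_measurable_prod)
    fix i assume i: "i \<in> {1..k}"
    note [measurable] = Rm[OF i]
    show "(\<lambda>R. (1 - R_sq n m R i) powr (- (real (n i * m) / 2) - 1)) \<in> borel_measurable (LL ?IB)" by measurable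
  qed
  have Qm[measurable]: "(\<lambda>R. \<Sum>i\<in>{1..k}. R_sq n m R i / (1 - R_sq n m R i)) \<in> borel_measurable (LL ?IB)"
    using QQ_measurable[of "{1..k}" n m] by (simp add: QQ_def)
  have ind: "(\<Prod>i\<in>{1..k}. indicator {..<1} (R_sq n m R i) :: real) = indicator {R. \<forall>i\<in>{1..k}. R_sq n m R i < 1} R" for R
  proof (cases "\<forall>i\<in>{1..k}. R_sq n m R i < 1")
    case True then show ?thesis by (simp add: indicator_def)
  next
    case False
    then obtain i where "i \<in> {1..k}" "\<not> R_sq n m R i < 1" by auto
    then show ?thesis using False by (intro trans[OF prod_zero]) (auto intro!: bexI[of _ i] simp: indicator_def)
  qed
  show ?thesis unfolding Db_def ind[symmetric] by measurable
qed

theorem part_b: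
  fixes k :: nat and n :: "nat \<Rightarrow> nat"
  assumes m_pos: "1 \<le> m"
    and n_ge: "\<forall>i\<le>k. m \<le> n i"
    and N_def: "N = (\<Sum>i\<le>k. n i)"
    and h_meas: "h \<in> borel_measurable (restrict_space borel {0..})"
    and h_nonneg: "\<forall>t\<ge>0. 0 \<le> h t"
    and h_norm: "(\<integral>\<^sup>+ X. ennreal (h (frob_sq N m X)) \<partial>mat_lebesgue N m) = 1"
  shows "distr (spherical_dist N m h) (R_lebesgue k n m) (R_stat k n m)
       = density (R_lebesgue k n m) (\<lambda>R. ennreal (Db N n m k R))"
proof -
  have Rl: "R_lebesgue k n m = LL (ix n m {1..k})" by (simp add: R_lebesgue_def R_idx_ix)
  let ?IB = "ix n m {1..k}"
  have hm: "hp h \<in> borel_measurable borel" by (rule hp_measurable[OF h_meas])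
  have hn: "\<forall>t. 0 \<le> hp h t" using h_nonneg by (simp add: hp_def)
  have fm: "(\<lambda>X. (V_stat n m X, R_stat k n m X)) \<in> measurable (spherical_dist N m h) (lborel \<Otimes>\<^sub>M LL ?IB)"
    unfolding spherical_dist_def using stats_measurable[OF N_def] by simp
  interpret s1: sigma_finite_measure "LL ?IB" by (rule LLps.sigma_finite) (simp add: finite_ix)
  interpret ps: pair_sigma_finite lborel "LL ?IB" ..
  note dm = dens_measurable[OF hm, of N n m k]
  note Dbm = Db_measurable[of N n m k]
  have "distr (spherical_dist N m h) (R_lebesgue k n m) (R_stat k n m)
      = distr (distr (spherical_dist N m h) (lborel \<Otimes>\<^sub>M LL ?IB) (\<lambda>X. (V_stat n m X, R_stat k n m X))) (LL ?IB) snd"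
    unfolding Rl by (subst distr_distr) (use fm in \<open>auto simp: o_def\<close>)
  also have "\<dots> = distr (density (lborel \<Otimes>\<^sub>M LL ?IB) (\<lambda>p. ennreal (dens N n m k h p))) (LL ?IB) snd"
    using part_a[OF m_pos n_ge N_def h_meas h_nonneg] by (simp add: Rl)
  also have "\<dots> = density (LL ?IB) (\<lambda>R. ennreal (Db N n m k R))"
  proof (rule measure_eqI)
    show "sets (distr (density (lborel \<Otimes>\<^sub>M LL ?IB) (\<lambda>p. ennreal (dens N n m k h p))) (LL ?IB) snd)
        = sets (density (LL ?IB) (\<lambda>R. ennreal (Db N n m k R)))" by simp
    fix B assume "B \<in> sets (distr (density (lborel \<Otimes>\<^sub>M LL ?IB) (\<lambda>p. ennreal (dens N n m k h p))) (LL ?IB) snd)"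
    then have B: "B \<in> sets (LL ?IB)" by simp
    have "emeasure (distr (density (lborel \<Otimes>\<^sub>M LL ?IB) (\<lambda>p. ennreal (dens N n m k h p))) (LL ?IB) snd) B
        = emeasure (density (lborel \<Otimes>\<^sub>M LL ?IB) (\<lambda>p. ennreal (dens N n m k h p))) (snd -` B \<inter> space (lborel \<Otimes>\<^sub>M LL ?IB))"
      using B by (subst emeasure_distr) auto
    also have "\<dots> = (\<integral>\<^sup>+ p. ennreal (dens N n m k h p) * indicator (snd -` B \<inter> space (lborel \<Otimes>\<^sub>M LL ?IB)) p \<partial>(lborel \<Otimes>\<^sub>M LL ?IB))"
    proof -
      have sm: "snd -` B \<inter> space (lborel \<Otimes>\<^sub>M LL ?IB) \<in> sets (lborel \<Otimes>\<^sub>M LL ?IB)"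
        by (rule measurable_sets[OF measurable_snd B])
      have dm': "(\<lambda>p. ennreal (dens N n m k h p)) \<in> borel_measurable (lborel \<Otimes>\<^sub>M LL ?IB)"
        using dm by (rule measurable_compose[OF _ measurable_ennreal])
      show ?thesis by (rule emeasure_density[OF dm' sm])
    qed
    also have "\<dots> = (\<integral>\<^sup>+ p. ennreal (dens N n m k h p) * indicator B (snd p) \<partial>(lborel \<Otimes>\<^sub>M LL ?IB))"
      by (intro nn_integral_cong) (auto simp: indicator_def)
    also have "\<dots> = (\<integral>\<^sup>+ R. \<integral>\<^sup>+ v. ennreal (dens N n m k h (v, R)) * indicator B R \<partial>lborel \<partial>LL ?IB)"
    proof -
      note [measurable] = dm
      have "(\<lambda>p. ennreal (dens N n m k h p) * indicator B (snd p)) \<in> borel_measurable (lborel \<Otimes>\<^sub>M LL ?IB)"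
        using B by measurable
      from ps.nn_integral_snd[OF this] show ?thesis by simp
    qed
    also have "\<dots> = (\<integral>\<^sup>+ R. ennreal (Db N n m k R) * indicator B R \<partial>LL ?IB)"
    proof (rule nn_integral_cong)
      fix R assume R: "R \<in> space (LL ?IB)"
      have "(\<integral>\<^sup>+ v. ennreal (dens N n m k h (v, R)) * indicator B R \<partial>lborel)
          = (\<integral>\<^sup>+ v. ennreal (dens N n m k h (v, R)) \<partial>lborel) * indicator B R"
      proof (rule nn_integral_multc)
        have pm: "(\<lambda>v. (v, R)) \<in> measurable lborel (lborel \<Otimes>\<^sub>M LL ?IB)"
          by (rule measurable_Pair[OF measurable_ident_sets[OF refl] measurable_const[OF R]])
        have "(\<lambda>v. dens N n m k h (v, R)) \<in> borel_measurable lborel"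
          using measurable_compose[OF pm dm] by simp
        then show "(\<lambda>v. ennreal (dens N n m k h (v, R))) \<in> borel_measurable lborel"
          by (rule measurable_compose[OF _ measurable_ennreal])
      qed
      then show "(\<integral>\<^sup>+ v. ennreal (dens N n m k h (v, R)) * indicator B R \<partial>lborel) = ennreal (Db N n m k R) * indicator B R"
        by (simp add: marg[OF m_pos n_ge N_def hm hn h_norm])
    qed
    also have "\<dots> = emeasure (density (LL ?IB) (\<lambda>R. ennreal (Db N n m k R))) B"
      using B Dbm by (subst emeasure_density) auto
    finally show "emeasure (distr (density (lborel \<Otimes>\<^sub>M LL ?IB) (\<lambda>p. ennreal (dens N n m k h p))) (LL ?IB) snd) B
        = emeasure (density (LL ?IB) (\<lambda>R. ennreal (Db N n m k R))) B" .
  qed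
  finally show ?thesis by (simp add: Rl)
qed

theorem theorem4:
  fixes h :: "real \<Rightarrow> real" and k m :: nat and n :: "nat \<Rightarrow> nat" and N :: nat
  assumes m_pos: "1 \<le> m"
    and n_ge: "\<forall>i\<le>k. m \<le> n i"
    and N_def: "N = (\<Sum>i\<le>k. n i)"
    and h_meas: "h \<in> borel_measurable (restrict_space borel {0..})"
    and h_nonneg: "\<forall>t\<ge>0. 0 \<le> h t"
    and h_norm: "(\<integral>\<^sup>+ X. ennreal (h (frob_sq N m X)) \<partial>mat_lebesgue N m) = 1"
  shows
    "distr (spherical_dist N m h) (lborel \<Otimes>\<^sub>M R_lebesgue k n m) (\<lambda>X. (V_stat n m X, R_stat k n m X))
       = density (lborel \<Otimes>\<^sub>M R_lebesgue k n m)
           (\<lambda>(v, R). ennreal (indicator {(v, R). v > 0 \<and> (\<forall>i\<in>{1..k}. R_sq n m R i < 1)} (v, R)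
              * (pi powr (real (n 0 * m) / 2) / Gamma (real (n 0 * m) / 2)
                 * v powr (real (N * m) / 2 - 1)
                 * h (v * (1 + (\<Sum>i=1..k. R_sq n m R i / (1 - R_sq n m R i))))
                 * (\<Prod>i=1..k. (1 - R_sq n m R i) powr (- (real (n i * m) / 2) - 1)))))
     \<and> distr (spherical_dist N m h) (R_lebesgue k n m) (R_stat k n m)
       = density (R_lebesgue k n m)
           (\<lambda>R. ennreal (indicator {R. \<forall>i\<in>{1..k}. R_sq n m R i < 1} R
              * (Gamma (real (N * m) / 2)
                   / (pi powr (real ((N - n 0) * m) / 2) * Gamma (real (n 0 * m) / 2))
                 * (1 + (\<Sum>i=1..k. R_sq n m R i / (1 - R_sq n m R i))) powr (- (real (N * m) / 2))
                 * (\<Prod>i=1..k. (1 - R_sq n m R i) powr (- (real (n i * m) / 2) - 1)))))"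
proof -
  have e1: "(\<lambda>(v, R). ennreal (indicator {(v, R). v > 0 \<and> (\<forall>i\<in>{1..k}. R_sq n m R i < 1)} (v, R)
              * (pi powr (real (n 0 * m) / 2) / Gamma (real (n 0 * m) / 2)
                 * v powr (real (N * m) / 2 - 1)
                 * h (v * (1 + (\<Sum>i=1..k. R_sq n m R i / (1 - R_sq n m R i))))
                 * (\<Prod>i=1..k. (1 - R_sq n m R i) powr (- (real (n i * m) / 2) - 1)))))
      = (\<lambda>p. ennreal (dens N n m k h p))"
  proof (rule ext)
    fix p :: "real \<times> ((nat \<times> nat \<times> nat) \<Rightarrow> real)"
    obtain v R where p: "p = (v, R)" by (cases p) auto
    show "(\<lambda>(v, R). ennreal (indicator {(v, R). v > 0 \<and> (\<forall>i\<in>{1..k}. R_sq n m R i < 1)} (v, R)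
              * (pi powr (real (n 0 * m) / 2) / Gamma (real (n 0 * m) / 2)
                 * v powr (real (N * m) / 2 - 1)
                 * h (v * (1 + (\<Sum>i=1..k. R_sq n m R i / (1 - R_sq n m R i))))
                 * (\<Prod>i=1..k. (1 - R_sq n m R i) powr (- (real (n i * m) / 2) - 1))))) p
      = ennreal (dens N n m k h p)"
      unfolding p by (simp only: case_prod_conv dens_eq)
  qed
  have e2: "(\<lambda>R. ennreal (indicator {R. \<forall>i\<in>{1..k}. R_sq n m R i < 1} R
              * (Gamma (real (N * m) / 2)
                   / (pi powr (real ((N - n 0) * m) / 2) * Gamma (real (n 0 * m) / 2))
                 * (1 + (\<Sum>i=1..k. R_sq n m R i / (1 - R_sq n m R i))) powr (- (real (N * m) / 2))
                 * (\<Prod>i=1..k. (1 - R_sq n m R i) powr (- (real (n i * m) / 2) - 1)))))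
      = (\<lambda>R. ennreal (Db N n m k R))"
    by (simp add: Db_def)
  show ?thesis
    unfolding e1 e2
    using part_a[OF m_pos n_ge N_def h_meas h_nonneg] part_b[OF m_pos n_ge N_def h_meas h_nonneg h_norm]
    by blast
qed

end
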